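(* For every simplifiable hyperoctahedral category of partitions $\mathcal C$, the set $F(\mathcal C)$ is a proper $S_0$-invariant subgroup of $E$. The map $\mathcal C\mapsto F(\mathcal C)$ is a bijection from the set of simplifiable hyperoctahedral categories of partitions onto the set of proper $S_0$-invariant subgroups of $E$, with inverse $H\mapsto\mathcal C_H$; i.e. $F(\mathcal C_H)=H$ and $\mathcal C_{F(\mathcal C)}=\mathcal C$. Both maps preserve inclusion, so $F$ is a lattice isomorphism.
   Context: A partition $p\in P(k,l)$ ($k,l\ge 0$) is a partition of the disjoint union of $k$ ordered upper points $1,\dots,k$ and $l$ ordered lower points $1',\dots,l'$ into nonempty disjoint subsets called blocks; $P=\bigcup_{k,l}P(k,l)$. Operations on partitions: the tensor product $p\otimes q$ (horizontal juxtaposition, $q$ placed to the right of $p$); the composition of $p\in P(k,l)$ with $q\in P(l,m)$ (stack $p$ on top of $q$, identify the lower points of $p$ with the upper points of $q$, merge blocks connected through these middle points, then erase the middle points and any block lying entirely among them), giving a partition in $P(k,m)$; the involution $p^*$ (reflection of $p$ upside down); and rotation (moving the leftmost, resp. rightmost, point of one row to the leftmost, resp. rightmost, position of the other row, keeping the blocks). A category of partitions is a subset $\mathcal C\subseteq P$ containing the pair partition $\sqcap\in P(0,2)$ (one block consisting of two lower points) and the identity partition $|\in P(1,1)$ (one block $\{1,1'\}$), and closed under these four operations. Special partitions: the four block $b_4\in P(0,4)$ (one block of four lower points); the double singleton $\uparrow\otimes\uparrow\in P(0,2)$ (two one-point blocks); the pair positioner $\rho\in P(3,3)$ with blocks $\{1,2,2',3'\}$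 and $\{3,1'\}$. A category of partitions $\mathcal C$ is hyperoctahedral if $b_4\in\mathcal C$ and $\uparrow\otimes\uparrow\notin\mathcal C$; it is simplifiable hyperoctahedral if moreover $\rho\in\mathcal C$. Let $L=\{a_1,a_2,\dots\}$, $\mathbb F_L$ the free group on $L$, $G=\mathbb Z_2^{*\infty}$ the free product of countably many copies of $\mathbb Z/2\mathbb Z$ generated by $a_1,a_2,\dots$ with $a_i^2=e$, and $\pi:\mathbb F_L\to G$ the canonical surjection. A labelling $\ell$ of a partition $p$ assigns pairwise distinct letters of $L$ to the blocks of $p$; $w(p,\ell)\in\mathbb F_L$ is the word obtained by reading the labels of the points of $p$ starting at the leftmost upper point, going through the upper row from left to right and then through the lower row from right to left. For a category $\mathcal C$, $F(\mathcal C)=\{\pi(w(p,\ell)) : p\in\mathcal C,\ \ell\text{ a labelling of }p\}$. $E\le G$ is the subgroup of elements of even length. $S_0\subseteq\mathrm{End}(G)$ is the subsemigroup generated by: (1) for every $n\in\mathbb N$ and every choice of indices $i(1),\dots,i(n)$, the endomorphism with $a_k\mapsto a_{i(k)}$ for $1\le k\le n$ and $a_k\mapsto a_k$ for $k>n$; (2) for every $k$, the conjugation $w\mapsto a_kwa_k$. A subgroup $H$ is $S_0$-invariant if $\phi(H)\subseteq H$ for all $\phi\in S_0$. For a proper $S_0$-invariant subgroup $H$ of $E$, $\mathcal C_H=\{p\in P : \pi(w(p,\ell))\in H\text{ for some labelling }\ell\text{ of }p\}$. *)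

theory Defs
  imports "HOL-Algebra.Group" "HOL-Library.Disjoint_Sets"
begin

text \<open>Points of a partition in P(k,l): upper points Up 0 .. Up (k-1) (= 1..k)
  and lower points Lo 0 .. Lo (l-1) (= 1'..l').\<close>
datatype pt = Up nat | Lo nat

type_synonym part = "nat \<times> nat \<times> pt set set"

definition points :: "nat \<Rightarrow> nat \<Rightarrow> pt set" where
  "points k l = Up ` {..<k} \<union> Lo ` {..<l}"

definition upk :: "part \<Rightarrow> nat" where "upk p = fst p"
definition lol :: "part \<Rightarrow> nat" where "lol p = fst (snd p)"
definition blocks :: "part \<Rightarrow> pt set set" where "blocks p = snd (snd p)"

definition is_part :: "part \<Rightarrow> bool" where
  "is_part p \<longleftrightarrow> partition_on (points (upk p) (lol p)) (blocks p)"

definition Parts :: "part set" where "Parts = {p. is_part p}"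

definition map_blocks :: "(pt \<Rightarrow> pt) \<Rightarrow> pt set set \<Rightarrow> pt set set" where
  "map_blocks f B = (\<lambda>b. f ` b) ` B"

fun shift_pt :: "nat \<Rightarrow> nat \<Rightarrow> pt \<Rightarrow> pt" where
  "shift_pt k l (Up i) = Up (i + k)"
| "shift_pt k l (Lo j) = Lo (j + l)"

definition tensor :: "part \<Rightarrow> part \<Rightarrow> part" where
  "tensor p q = (upk p + upk q, lol p + lol q,
      blocks p \<union> map_blocks (shift_pt (upk p) (lol p)) (blocks q))"

fun flip_pt :: "pt \<Rightarrow> pt" where
  "flip_pt (Up i) = Lo i"
| "flip_pt (Lo j) = Up j"

definition involution :: "part \<Rightarrow> part" where
  "involution p = (lol p, upk p, map_blocks flip_pt (blocks p))"

text \<open>Composition: p on top of q; points of the stacked picture.\<close>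
datatype pt3 = Top nat | Mid nat | Bot nat

fun emb_upper :: "pt \<Rightarrow> pt3" where
  "emb_upper (Up i) = Top i"
| "emb_upper (Lo j) = Mid j"

fun emb_lower :: "pt \<Rightarrow> pt3" where
  "emb_lower (Up j) = Mid j"
| "emb_lower (Lo j) = Bot j"

fun emb_res :: "pt \<Rightarrow> pt3" where
  "emb_res (Up i) = Top i"
| "emb_res (Lo j) = Bot j"

definition same_block_rel :: "(pt \<Rightarrow> pt3) \<Rightarrow> pt set set \<Rightarrow> (pt3 \<times> pt3) set" where
  "same_block_rel e B = {(e x, e y) | x y. \<exists>b\<in>B. x \<in> b \<and> y \<in> b}"

text \<open>Composition of p in P(k,l) with q in P(l,m) (only meaningful when lol p = upk q):
  blocks connected through the middle points are merged, middle points are erased,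
  and blocks lying entirely in the middle disappear.\<close>
definition compose :: "part \<Rightarrow> part \<Rightarrow> part" where
  "compose p q =
     (let R = (same_block_rel emb_upper (blocks p) \<union> same_block_rel emb_lower (blocks q))\<^sup>*;
          A = points (upk p) (lol q)
      in (upk p, lol q, (\<lambda>x. {y \<in> A. (emb_res x, emb_res y) \<in> R}) ` A))"

fun rotUL_pt :: "pt \<Rightarrow> pt" where
  "rotUL_pt (Up 0) = Lo 0"
| "rotUL_pt (Up (Suc i)) = Up i"
| "rotUL_pt (Lo j) = Lo (Suc j)"

fun rotLU_pt :: "pt \<Rightarrow> pt" where
  "rotLU_pt (Lo 0) = Up 0"
| "rotLU_pt (Lo (Suc j)) = Lo j"
| "rotLU_pt (Up i) = Up (Suc i)"

fun rotUR_pt :: "nat \<Rightarrow> nat \<Rightarrow> pt \<Rightarrow> pt" where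
  "rotUR_pt k l (Up i) = (if i = k - 1 then Lo l else Up i)"
| "rotUR_pt k l (Lo j) = Lo j"

fun rotLR_pt :: "nat \<Rightarrow> nat \<Rightarrow> pt \<Rightarrow> pt" where
  "rotLR_pt k l (Lo j) = (if j = l - 1 then Up k else Lo j)"
| "rotLR_pt k l (Up i) = Up i"

text \<open>Leftmost upper point to leftmost lower position (needs upk p > 0).\<close>
definition rot_left_down :: "part \<Rightarrow> part" where
  "rot_left_down p = (upk p - 1, lol p + 1, map_blocks rotUL_pt (blocks p))"

text \<open>Leftmost lower point to leftmost upper position (needs lol p > 0).\<close>
definition rot_left_up :: "part \<Rightarrow> part" where
  "rot_left_up p = (upk p + 1, lol p - 1, map_blocks rotLU_pt (blocks p))"

text \<open>Rightmost upper point to rightmost lower position (needs upk p > 0).\<close>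
definition rot_right_down :: "part \<Rightarrow> part" where
  "rot_right_down p = (upk p - 1, lol p + 1, map_blocks (rotUR_pt (upk p) (lol p)) (blocks p))"

text \<open>Rightmost lower point to rightmost upper position (needs lol p > 0).\<close>
definition rot_right_up :: "part \<Rightarrow> part" where
  "rot_right_up p = (upk p + 1, lol p - 1, map_blocks (rotLR_pt (upk p) (lol p)) (blocks p))"

definition pair_part :: part where "pair_part = (0, 2, {{Lo 0, Lo 1}})"
definition id_part :: part where "id_part = (1, 1, {{Up 0, Lo 0}})"
definition four_block :: part where "four_block = (0, 4, {{Lo 0, Lo 1, Lo 2, Lo 3}})"
definition double_singleton :: part where "double_singleton = (0, 2, {{Lo 0}, {Lo 1}})"
definition pair_positioner :: part where
  "pair_positioner = (3, 3, {{Up 0, Up 1, Lo 1, Lo 2}, {Up 2, Lo 0}})"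

definition category_of_partitions :: "part set \<Rightarrow> bool" where
  "category_of_partitions C \<longleftrightarrow>
     C \<subseteq> Parts \<and> pair_part \<in> C \<and> id_part \<in> C \<and>
     (\<forall>p\<in>C. \<forall>q\<in>C. tensor p q \<in> C) \<and>
     (\<forall>p\<in>C. \<forall>q\<in>C. lol p = upk q \<longrightarrow> compose p q \<in> C) \<and>
     (\<forall>p\<in>C. involution p \<in> C) \<and>
     (\<forall>p\<in>C. 0 < upk p \<longrightarrow> rot_left_down p \<in> C \<and> rot_right_down p \<in> C) \<and>
     (\<forall>p\<in>C. 0 < lol p \<longrightarrow> rot_left_up p \<in> C \<and> rot_right_up p \<in> C)"

definition hyperoctahedral :: "part set \<Rightarrow> bool" where
  "hyperoctahedral C \<longleftrightarrow> category_of_partitions C \<and> four_block \<in> C \<and> double_singleton \<notin> C"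

definition simplifiable_hyperoctahedral :: "part set \<Rightarrow> bool" where
  "simplifiable_hyperoctahedral C \<longleftrightarrow> hyperoctahedral C \<and> pair_positioner \<in> C"

text \<open>Generator a_{i+1} is represented by the letter i :: nat. Elements of G are
  reduced words (no two equal adjacent letters).\<close>

definition reduced :: "nat list \<Rightarrow> bool" where
  "reduced w \<longleftrightarrow> (\<forall>i. Suc i < length w \<longrightarrow> w ! i \<noteq> w ! Suc i)"

fun red :: "nat list \<Rightarrow> nat list" where
  "red [] = []"
| "red (x # xs) = (case red xs of [] \<Rightarrow> [x] | y # ys \<Rightarrow> if x = y then ys else x # y # ys)"

definition Z2free :: "nat list monoid" where
  "Z2free = \<lparr>carrier = {w. reduced w}, mult = (\<lambda>x y. red (x @ y)), one = []\<rparr>"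

definition piw :: "nat list \<Rightarrow> nat list" where
  "piw xs = foldr (\<lambda>i g. [i] \<otimes>\<^bsub>Z2free\<^esub> g) xs \<one>\<^bsub>Z2free\<^esub>"

definition Ev :: "nat list set" where
  "Ev = {w \<in> carrier Z2free. even (length w)}"

definition subst_endo :: "nat \<Rightarrow> (nat \<Rightarrow> nat) \<Rightarrow> nat list \<Rightarrow> nat list" where
  "subst_endo n idx w = piw (map (\<lambda>k. if k < n then idx k else k) w)"

definition conj_endo :: "nat \<Rightarrow> nat list \<Rightarrow> nat list" where
  "conj_endo k w = [k] \<otimes>\<^bsub>Z2free\<^esub> w \<otimes>\<^bsub>Z2free\<^esub> [k]"

inductive_set S0 :: "(nat list \<Rightarrow> nat list) set" where
  gen_subst: "subst_endo n idx \<in> S0"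
| gen_conj: "conj_endo k \<in> S0"
| comp: "\<phi> \<in> S0 \<Longrightarrow> \<psi> \<in> S0 \<Longrightarrow> \<phi> \<circ> \<psi> \<in> S0"

definition S0_invariant :: "nat list set \<Rightarrow> bool" where
  "S0_invariant H \<longleftrightarrow> (\<forall>\<phi>\<in>S0. \<phi> ` H \<subseteq> H)"

definition proper_S0_inv_subgroup_of_E :: "nat list set \<Rightarrow> bool" where
  "proper_S0_inv_subgroup_of_E H \<longleftrightarrow>
     subgroup H Z2free \<and> H \<subseteq> Ev \<and> H \<noteq> Ev \<and> S0_invariant H"

definition block_of :: "part \<Rightarrow> pt \<Rightarrow> pt set" where
  "block_of p x = (THE b. b \<in> blocks p \<and> x \<in> b)"

definition labelling :: "part \<Rightarrow> (pt set \<Rightarrow> nat) \<Rightarrow> bool" where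
  "labelling p lab \<longleftrightarrow> inj_on lab (blocks p)"

definition word :: "part \<Rightarrow> (pt set \<Rightarrow> nat) \<Rightarrow> nat list" where
  "word p lab = map (\<lambda>i. lab (block_of p (Up i))) [0..<upk p]
             @ rev (map (\<lambda>j. lab (block_of p (Lo j))) [0..<lol p])"

definition Fcat :: "part set \<Rightarrow> nat list set" where
  "Fcat C = {piw (word p lab) | p lab. p \<in> C \<and> labelling p lab}"

definition CH :: "nat list set \<Rightarrow> part set" where
  "CH H = {p \<in> Parts. \<exists>lab. labelling p lab \<and> piw (word p lab) \<in> H}"

end

theory Submission
  imports Defs
begin


section \<open>Reduction in Z2free\<close>

definition cr :: "nat \<Rightarrow> nat list \<Rightarrow> nat list" where
  "cr x ys = (case ys of [] \<Rightarrow> [x] | y # ys' \<Rightarrow> if x = y then ys' else x # ys)"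

lemma red_Cons: "red (x # xs) = cr x (red xs)"
  by (simp add: cr_def split: list.splits)

declare red.simps(2)[simp del]

lemma reduced_Nil[simp]: "reduced []" by (simp add: reduced_def)
lemma reduced_single[simp]: "reduced [x]" by (simp add: reduced_def)

lemma reduced_Cons: "reduced (x # xs) \<longleftrightarrow> reduced xs \<and> (xs = [] \<or> x \<noteq> hd xs)"
proof (cases xs)
  case Nil then show ?thesis by simp
next
  case (Cons y ys)
  show ?thesis
  proof
    assume r: "reduced (x # xs)"
    have "reduced xs" unfolding reduced_def
    proof (intro allI impI)
      fix i assume "Suc i < length xs"
      then show "xs ! i \<noteq> xs ! Suc i" using r[unfolded reduced_def, rule_format, of "Suc i"] by simp
    qed
    moreover have "x \<noteq> hd xs" using r[unfolded reduced_def, rule_format, of 0] Cons by simp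
    ultimately show "reduced xs \<and> (xs = [] \<or> x \<noteq> hd xs)" by simp
  next
    assume a: "reduced xs \<and> (xs = [] \<or> x \<noteq> hd xs)"
    show "reduced (x # xs)" unfolding reduced_def
    proof (intro allI impI)
      fix i assume "Suc i < length (x # xs)"
      then show "(x # xs) ! i \<noteq> (x # xs) ! Suc i"
        using a Cons by (cases i) (auto simp: reduced_def)
    qed
  qed
qed

lemma reduced_cr: "reduced ys \<Longrightarrow> reduced (cr x ys)"
  by (auto simp: cr_def reduced_Cons split: list.splits)

lemma reduced_red[simp]: "reduced (red xs)"
  by (induction xs) (auto simp: red_Cons reduced_cr)

lemma cr_cr: "reduced ys \<Longrightarrow> cr x (cr x ys) = ys"
  by (auto simp: cr_def reduced_Cons split: list.splits)

lemma red_reduced: "reduced xs \<Longrightarrow> red xs = xs"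
  by (induction xs) (auto simp: red_Cons reduced_Cons cr_def split: list.splits)

lemma red_red[simp]: "red (red xs) = red xs"
  by (simp add: red_reduced)

lemma red_append: "red (xs @ ys) = foldr cr xs (red ys)"
  by (induction xs) (auto simp: red_Cons)

lemma reduced_foldr: "reduced r \<Longrightarrow> reduced (foldr cr zs r)"
  by (induction zs) (auto simp: reduced_cr)

lemma foldr_red: "reduced r \<Longrightarrow> foldr cr (red zs) r = foldr cr zs r"
proof (induction zs)
  case Nil then show ?case by simp
next
  case (Cons x zs)
  have IH: "foldr cr (red zs) r = foldr cr zs r" using Cons by simp
  show ?case
  proof (cases "\<exists>w. red zs = x # w")
    case True
    then obtain w where w: "red zs = x # w" by blast
    have "cr x (red zs) = w" using w by (simp add: cr_def)
    then have "foldr cr (red (x # zs)) r = foldr cr w r" by (simp add: red_Cons)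
    also have "\<dots> = cr x (cr x (foldr cr w r))"
      using cr_cr reduced_foldr Cons.prems by simp
    also have "cr x (foldr cr w r) = foldr cr (red zs) r" using w by simp
    finally show ?thesis using IH by simp
  next
    case False
    then have "cr x (red zs) = x # red zs" by (auto simp: cr_def split: list.splits)
    then show ?thesis using IH by (simp add: red_Cons)
  qed
qed

lemma red_append_left: "red (red xs @ ys) = red (xs @ ys)"
  by (simp add: red_append foldr_red)

lemma red_append_right: "red (xs @ red ys) = red (xs @ ys)"
  by (simp add: red_append)

lemma red_cancel: "red (xs @ x # x # ys) = red (xs @ ys)"
  by (simp add: red_append cr_cr red_Cons)

lemma red_cancel_rev: "red (xs @ rev m @ m @ ys) = red (xs @ ys)"
proof (induction m arbitrary: xs ys rule: rev_induct)
  case Nil then show ?case by simp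
next
  case (snoc a m)
  have "xs @ rev (m @ [a]) @ (m @ [a]) @ ys = (xs @ [a]) @ rev m @ m @ a # ys" by simp
  then have "red (xs @ rev (m @ [a]) @ (m @ [a]) @ ys) = red ((xs @ [a]) @ a # ys)"
    using snoc[of "xs @ [a]" "a # ys"] by simp
  also have "\<dots> = red (xs @ ys)" using red_cancel[of xs a ys] by simp
  finally show ?case .
qed

lemma red_rev_self: "red (rev m @ m) = []"
  using red_cancel_rev[of "[]" m "[]"] by simp

lemma red_self_rev: "red (m @ rev m) = []"
  using red_cancel_rev[of "[]" "rev m" "[]"] by simp

lemma red_map: "red (map f (red xs)) = red (map f xs)"
proof (induction xs)
  case Nil then show ?case by simp
next
  case (Cons x xs)
  show ?case
  proof (cases "\<exists>w. red xs = x # w")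
    case True
    then obtain w where w: "red xs = x # w" by blast
    have "red (map f (red (x # xs))) = red (map f w)" using w by (simp add: red_Cons cr_def)
    also have "\<dots> = cr (f x) (cr (f x) (red (map f w)))" by (simp add: cr_cr)
    also have "cr (f x) (red (map f w)) = red (map f xs)" using Cons w by (simp add: red_Cons)
    finally show ?thesis by (simp add: red_Cons)
  next
    case False
    then have "cr x (red xs) = x # red xs" by (auto simp: cr_def split: list.splits)
    then show ?thesis using Cons by (simp add: red_Cons)
  qed
qed

lemma reduced_rev: "reduced xs \<Longrightarrow> reduced (rev xs)"
  unfolding reduced_def
proof (intro allI impI)
  fix i assume r: "\<forall>i. Suc i < length xs \<longrightarrow> xs ! i \<noteq> xs ! Suc i" and i: "Suc i < length (rev xs)"
  have "xs ! (length xs - Suc (Suc i)) \<noteq> xs ! Suc (length xs - Suc (Suc i))"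
    using r i by auto
  moreover have "Suc (length xs - Suc (Suc i)) = length xs - Suc i" using i by simp
  ultimately show "rev xs ! i \<noteq> rev xs ! Suc i" using i by (simp add: rev_nth)
qed

lemma Z2_carrier[simp]: "carrier Z2free = {w. reduced w}" by (simp add: Z2free_def)
lemma Z2_mult[simp]: "x \<otimes>\<^bsub>Z2free\<^esub> y = red (x @ y)" by (simp add: Z2free_def)
lemma Z2_one[simp]: "\<one>\<^bsub>Z2free\<^esub> = []" by (simp add: Z2free_def)

lemma group_Z2: "group Z2free"
proof (rule groupI)
  fix x y z assume "x \<in> carrier Z2free" "y \<in> carrier Z2free" "z \<in> carrier Z2free"
  show "x \<otimes>\<^bsub>Z2free\<^esub> y \<otimes>\<^bsub>Z2free\<^esub> z = x \<otimes>\<^bsub>Z2free\<^esub> (y \<otimes>\<^bsub>Z2free\<^esub> z)"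
    by (simp add: red_append_left red_append_right)
next
  fix x assume "x \<in> carrier Z2free"
  then show "\<exists>y\<in>carrier Z2free. y \<otimes>\<^bsub>Z2free\<^esub> x = \<one>\<^bsub>Z2free\<^esub>"
    by (intro bexI[of _ "rev x"]) (auto simp: red_rev_self reduced_rev)
qed (auto simp: red_reduced)

lemma Z2_inv: "reduced x \<Longrightarrow> inv\<^bsub>Z2free\<^esub> x = rev x"
  by (rule group.inv_equality[OF group_Z2]) (auto simp: red_rev_self reduced_rev)

lemma piw_red: "piw xs = red xs"
  unfolding piw_def by (induction xs) (auto simp: red_Cons red_append_right[of "[_]", simplified])


section \<open>Partitions given by label functions\<close>

definition pf :: "nat \<Rightarrow> nat \<Rightarrow> (pt \<Rightarrow> nat) \<Rightarrow> part" where
  "pf k l f = (k, l, (\<lambda>x. {y \<in> points k l. f y = f x}) ` points k l)"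

definition wordf :: "nat \<Rightarrow> nat \<Rightarrow> (pt \<Rightarrow> nat) \<Rightarrow> nat list" where
  "wordf k l f = map (\<lambda>i. f (Up i)) [0..<k] @ rev (map (\<lambda>j. f (Lo j)) [0..<l])"

lemma upk_pf[simp]: "upk (pf k l f) = k" by (simp add: pf_def upk_def)
lemma lol_pf[simp]: "lol (pf k l f) = l" by (simp add: pf_def lol_def)
lemma blocks_pf: "blocks (pf k l f) = (\<lambda>x. {y \<in> points k l. f y = f x}) ` points k l"
  by (simp add: pf_def blocks_def)

lemma Up_points[simp]: "Up i \<in> points k l \<longleftrightarrow> i < k" by (auto simp: points_def)
lemma Lo_points[simp]: "Lo j \<in> points k l \<longleftrightarrow> j < l" by (auto simp: points_def)
lemma finite_points[simp]: "finite (points k l)" by (simp add: points_def)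

lemma word_wordf: "word p lab = wordf (upk p) (lol p) (\<lambda>x. lab (block_of p x))"
  by (simp add: word_def wordf_def)

lemma pf_Parts: "pf k l f \<in> Parts"
  unfolding Parts_def is_part_def mem_Collect_eq upk_pf lol_pf
  by (rule partition_onI) (auto simp: blocks_pf disjnt_def)

lemma part_unique: "partition_on A P \<Longrightarrow> x \<in> b \<Longrightarrow> b \<in> P \<Longrightarrow> x \<in> b' \<Longrightarrow> b' \<in> P \<Longrightarrow> b = b'"
  unfolding partition_on_def disjoint_def by blast

lemma block_of_pf: "x \<in> points k l \<Longrightarrow> block_of (pf k l f) x = {y \<in> points k l. f y = f x}"
  unfolding block_of_def by (rule the_equality) (auto simp: blocks_pf)

lemma pf_labelling: "\<exists>lab. labelling (pf k l f) lab \<and> word (pf k l f) lab = wordf k l f"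
proof -
  define lab where "lab = (\<lambda>b::pt set. f (SOME y. y \<in> b))"
  have lb: "x \<in> points k l \<Longrightarrow> lab {y \<in> points k l. f y = f x} = f x" for x
  proof -
    assume "x \<in> points k l"
    then have "\<exists>y. y \<in> {y \<in> points k l. f y = f x}" by blast
    then have "(SOME y. y \<in> {y \<in> points k l. f y = f x}) \<in> {y \<in> points k l. f y = f x}"
      by (rule someI_ex)
    then show ?thesis by (simp add: lab_def)
  qed
  have "labelling (pf k l f) lab"
    unfolding labelling_def inj_on_def blocks_pf using lb by auto
  moreover have "word (pf k l f) lab = wordf k l f"
    by (simp add: word_def wordf_def block_of_pf lb)
  ultimately show ?thesis by blast
qed

lemma Parts_pf:
  assumes "p \<in> Parts" "labelling p lab"
  shows "p = pf (upk p) (lol p) (\<lambda>x. lab (block_of p x))"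
proof -
  have P: "partition_on (points (upk p) (lol p)) (blocks p)"
    using assms(1) by (simp add: Parts_def is_part_def)
  have inj: "inj_on lab (blocks p)" using assms(2) by (simp add: labelling_def)
  let ?A = "points (upk p) (lol p)"
  have bo: "x \<in> ?A \<Longrightarrow> block_of p x \<in> blocks p \<and> x \<in> block_of p x" for x
  proof -
    assume x: "x \<in> ?A"
    then have "\<exists>!b. b \<in> blocks p \<and> x \<in> b" using P part_unique[OF P] by (auto simp: partition_on_def)
    then show ?thesis unfolding block_of_def by (rule theI')
  qed
  have bo_eq: "x \<in> b \<Longrightarrow> b \<in> blocks p \<Longrightarrow> block_of p x = b" for x b
  proof -
    assume "x \<in> b" "b \<in> blocks p"
    moreover then have "x \<in> ?A" using P by (auto simp: partition_on_def)
    ultimately show ?thesis using bo[of x] part_unique[OF P] by blast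
  qed
  have cls: "x \<in> ?A \<Longrightarrow> {y \<in> ?A. lab (block_of p y) = lab (block_of p x)} = block_of p x" for x
  proof
    assume x: "x \<in> ?A"
    show "{y \<in> ?A. lab (block_of p y) = lab (block_of p x)} \<subseteq> block_of p x"
      using bo inj x by (auto dest: inj_onD)
    show "block_of p x \<subseteq> {y \<in> ?A. lab (block_of p y) = lab (block_of p x)}"
    proof
      fix y assume y: "y \<in> block_of p x"
      then have "y \<in> ?A" using bo[OF x] P by (auto simp: partition_on_def)
      moreover have "block_of p y = block_of p x" using bo_eq[OF y] bo[OF x] by simp
      ultimately show "y \<in> {y \<in> ?A. lab (block_of p y) = lab (block_of p x)}" by simp
    qed
  qed
  have "blocks p = (\<lambda>x. {y \<in> ?A. lab (block_of p y) = lab (block_of p x)}) ` ?A"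
  proof
    show "blocks p \<subseteq> (\<lambda>x. {y \<in> ?A. lab (block_of p y) = lab (block_of p x)}) ` ?A"
    proof
      fix b assume b: "b \<in> blocks p"
      then have "b \<noteq> {}" using P by (auto simp: partition_on_def)
      then obtain x where "x \<in> b" by blast
      moreover then have "x \<in> ?A" using P b by (auto simp: partition_on_def)
      ultimately show "b \<in> (\<lambda>x. {y \<in> ?A. lab (block_of p y) = lab (block_of p x)}) ` ?A"
        using cls bo_eq b by (intro image_eqI[of _ _ x]) auto
    qed
    show "(\<lambda>x. {y \<in> ?A. lab (block_of p y) = lab (block_of p x)}) ` ?A \<subseteq> blocks p"
      using cls bo by auto
  qed
  then show ?thesis by (cases p) (simp add: pf_def upk_def lol_def blocks_def)
qed

lemma Parts_labelling_ex: "p \<in> Parts \<Longrightarrow> \<exists>lab. labelling p lab"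
proof -
  assume "p \<in> Parts"
  then have P: "partition_on (points (upk p) (lol p)) (blocks p)" by (simp add: Parts_def is_part_def)
  then have "blocks p \<subseteq> Pow (points (upk p) (lol p))" by (auto simp: partition_on_def)
  then have "finite (blocks p)" by (meson finite_Pow_iff finite_points finite_subset)
  then obtain lab :: "pt set \<Rightarrow> nat" where "inj_on lab (blocks p)"
    using finite_imp_inj_to_nat_seg by blast
  then show ?thesis by (auto simp: labelling_def)
qed

lemma pf_cong:
  assumes "\<And>x y. x \<in> points k l \<Longrightarrow> y \<in> points k l \<Longrightarrow> f x = f y \<longleftrightarrow> g x = g y"
  shows "pf k l f = pf k l g"
  unfolding pf_def using assms by (auto intro!: image_cong)

lemma wordf_cong:
  assumes "\<And>x. x \<in> points k l \<Longrightarrow> f x = g x"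
  shows "wordf k l f = wordf k l g"
  unfolding wordf_def using assms by simp

lemma wordf_comp: "wordf k l (\<lambda>x. h (f x)) = map h (wordf k l f)"
  by (simp add: wordf_def rev_map)

lemma wordf_length[simp]: "length (wordf k l f) = k + l" by (simp add: wordf_def)

lemma map_blocks_pf:
  assumes "g ` points k l = points k' l'" "\<And>x. x \<in> points k l \<Longrightarrow> g' (g x) = x"
    "\<And>z. z \<in> points k' l' \<Longrightarrow> g (g' z) = z"
  shows "map_blocks g (blocks (pf k l f)) = blocks (pf k' l' (\<lambda>z. f (g' z)))"
proof -
  have gin: "x \<in> points k l \<Longrightarrow> g x \<in> points k' l'" for x using assms(1) by blast
  have g'in: "z \<in> points k' l' \<Longrightarrow> g' z \<in> points k l" for z
    using assms(1,3) by (metis assms(2) imageE)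
  have cl: "g ` {y \<in> points k l. f y = f x} = {z \<in> points k' l'. f (g' z) = f (g' (g x))}"
    if x: "x \<in> points k l" for x
  proof
    show "g ` {y \<in> points k l. f y = f x} \<subseteq> {z \<in> points k' l'. f (g' z) = f (g' (g x))}"
      using gin assms(2) x by auto
    show "{z \<in> points k' l'. f (g' z) = f (g' (g x))} \<subseteq> g ` {y \<in> points k l. f y = f x}"
    proof
      fix z assume z: "z \<in> {z \<in> points k' l'. f (g' z) = f (g' (g x))}"
      then have "g' z \<in> {y \<in> points k l. f y = f x}" using g'in assms(2) x by auto
      then show "z \<in> g ` {y \<in> points k l. f y = f x}" using assms(3) z by (metis (no_types, lifting) imageI mem_Collect_eq)
    qed
  qed
  have "map_blocks g (blocks (pf k l f)) = (\<lambda>x. {z \<in> points k' l'. f (g' z) = f (g' (g x))}) ` points k l"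
    unfolding map_blocks_def blocks_pf image_image using cl by (auto intro!: image_cong)
  also have "\<dots> = (\<lambda>z'. {z \<in> points k' l'. f (g' z) = f (g' z')}) ` (g ` points k l)"
    by (simp add: image_image)
  finally show ?thesis using assms(1) by (simp add: blocks_pf)
qed

definition lf :: "nat \<Rightarrow> nat list \<Rightarrow> pt \<Rightarrow> nat" where
  "lf k zs x = (case x of Up i \<Rightarrow> zs ! i | Lo j \<Rightarrow> zs ! (length zs - 1 - j))"

lemma wordf_lf: "k \<le> length zs \<Longrightarrow> wordf k (length zs - k) (lf k zs) = zs"
  by (rule nth_equalityI) (auto simp: wordf_def lf_def nth_append rev_nth)

definition up :: "nat list \<Rightarrow> part" where "up xs = pf (length xs) 0 (lf (length xs) xs)"

lemma wordf_up: "wordf (length xs) 0 (lf (length xs) xs) = xs"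
  using wordf_lf[of "length xs" xs] by simp


lemma img_eqI: "(\<And>x. x \<in> A \<Longrightarrow> g x \<in> B) \<Longrightarrow> (\<And>z. z \<in> B \<Longrightarrow> g' z \<in> A) \<Longrightarrow>
   (\<And>z. z \<in> B \<Longrightarrow> g (g' z) = z) \<Longrightarrow> g ` A = B"
  by (auto simp: image_iff) (metis)

lemma involution_pf: "involution (pf k l f) = pf l k (\<lambda>x. f (flip_pt x))"
proof -
  have ff: "flip_pt (flip_pt x) = x" for x by (cases x) auto
  have fp: "flip_pt ` points k l = points l k"
  proof (rule img_eqI[of _ _ _ flip_pt])
    show "x \<in> points k l \<Longrightarrow> flip_pt x \<in> points l k" for x by (cases x) auto
    show "z \<in> points l k \<Longrightarrow> flip_pt z \<in> points k l" for z by (cases z) auto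
  qed (rule ff)
  show ?thesis unfolding involution_def
    using map_blocks_pf[OF fp, where g'=flip_pt and f=f] ff by (simp add: pf_def blocks_def upk_def lol_def)
qed

lemma wordf_involution: "wordf l k (\<lambda>x. f (flip_pt x)) = rev (wordf k l f)"
  by (simp add: wordf_def)

lemma rotUL_LU: "rotUL_pt (rotLU_pt x) = x"
  by (cases x rule: rotLU_pt.cases) auto
lemma rotLU_UL: "rotLU_pt (rotUL_pt x) = x"
  by (cases x rule: rotUL_pt.cases) auto

lemma rotUL_img: "rotUL_pt ` points (Suc k) l = points k (Suc l)"
proof (rule img_eqI[of _ _ _ rotLU_pt])
  show "x \<in> points (Suc k) l \<Longrightarrow> rotUL_pt x \<in> points k (Suc l)" for x
    by (cases x rule: rotUL_pt.cases) auto
  show "z \<in> points k (Suc l) \<Longrightarrow> rotLU_pt z \<in> points (Suc k) l" for z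
    by (cases z rule: rotLU_pt.cases) auto
qed (rule rotUL_LU)

lemma rotLU_img: "rotLU_pt ` points k (Suc l) = points (Suc k) l"
proof (rule img_eqI[of _ _ _ rotUL_pt])
  show "z \<in> points k (Suc l) \<Longrightarrow> rotLU_pt z \<in> points (Suc k) l" for z
    by (cases z rule: rotLU_pt.cases) auto
  show "x \<in> points (Suc k) l \<Longrightarrow> rotUL_pt x \<in> points k (Suc l)" for x
    by (cases x rule: rotUL_pt.cases) auto
qed (rule rotLU_UL)

lemma rot_left_down_pf: "rot_left_down (pf (Suc k) l f) = pf k (Suc l) (\<lambda>x. f (rotLU_pt x))"
  unfolding rot_left_down_def using map_blocks_pf[OF rotUL_img, where g'=rotLU_pt and f=f] rotLU_UL rotUL_LU
  by (simp add: pf_def blocks_def upk_def lol_def)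

lemma rot_left_up_pf: "rot_left_up (pf k (Suc l) f) = pf (Suc k) l (\<lambda>x. f (rotUL_pt x))"
  unfolding rot_left_up_def using map_blocks_pf[OF rotLU_img, where g'=rotUL_pt and f=f] rotLU_UL rotUL_LU
  by (simp add: pf_def blocks_def upk_def lol_def)

lemma wordf_rot_left_down:
  "wordf (Suc k) l f = a # r \<Longrightarrow> wordf k (Suc l) (\<lambda>x. f (rotLU_pt x)) = r @ [a]"
  by (auto simp: wordf_def map_upt_Suc simp del: upt_Suc)

lemma wordf_rot_left_up:
  "wordf k (Suc l) f = r @ [a] \<Longrightarrow> wordf (Suc k) l (\<lambda>x. f (rotUL_pt x)) = a # r"
  by (auto simp: wordf_def map_upt_Suc simp del: upt_Suc)

lemma rotUR_LR: "x \<in> points k (Suc l) \<Longrightarrow> rotUR_pt (Suc k) l (rotLR_pt k (Suc l) x) = x"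
  by (cases x) auto
lemma rotLR_UR: "x \<in> points (Suc k) l \<Longrightarrow> rotLR_pt k (Suc l) (rotUR_pt (Suc k) l x) = x"
  by (cases x) auto

lemma rotUR_img: "rotUR_pt (Suc k) l ` points (Suc k) l = points k (Suc l)"
proof
  show "rotUR_pt (Suc k) l ` points (Suc k) l \<subseteq> points k (Suc l)"
  proof
    fix z assume "z \<in> rotUR_pt (Suc k) l ` points (Suc k) l"
    then obtain x where x: "x \<in> points (Suc k) l" "z = rotUR_pt (Suc k) l x" by blast
    then show "z \<in> points k (Suc l)" by (cases x) auto
  qed
  show "points k (Suc l) \<subseteq> rotUR_pt (Suc k) l ` points (Suc k) l"
  proof
    fix z assume z: "z \<in> points k (Suc l)"
    have "rotLR_pt k (Suc l) z \<in> points (Suc k) l" using z by (cases z) auto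
    then show "z \<in> rotUR_pt (Suc k) l ` points (Suc k) l" by (metis rotUR_LR[OF z] imageI)
  qed
qed

lemma rotLR_img: "rotLR_pt k (Suc l) ` points k (Suc l) = points (Suc k) l"
proof
  show "rotLR_pt k (Suc l) ` points k (Suc l) \<subseteq> points (Suc k) l"
  proof
    fix z assume "z \<in> rotLR_pt k (Suc l) ` points k (Suc l)"
    then obtain x where x: "x \<in> points k (Suc l)" "z = rotLR_pt k (Suc l) x" by blast
    then show "z \<in> points (Suc k) l" by (cases x) auto
  qed
  show "points (Suc k) l \<subseteq> rotLR_pt k (Suc l) ` points k (Suc l)"
  proof
    fix z assume z: "z \<in> points (Suc k) l"
    have "rotUR_pt (Suc k) l z \<in> points k (Suc l)" using z by (cases z) auto
    then show "z \<in> rotLR_pt k (Suc l) ` points k (Suc l)" by (metis rotLR_UR[OF z] imageI)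
  qed
qed

lemma rot_right_down_pf: "rot_right_down (pf (Suc k) l f) = pf k (Suc l) (\<lambda>x. f (rotLR_pt k (Suc l) x))"
  unfolding rot_right_down_def using map_blocks_pf[OF rotUR_img, where g'="rotLR_pt k (Suc l)" and f=f] rotLR_UR rotUR_LR
  by (simp add: pf_def blocks_def upk_def lol_def)

lemma rot_right_up_pf: "rot_right_up (pf k (Suc l) f) = pf (Suc k) l (\<lambda>x. f (rotUR_pt (Suc k) l x))"
  unfolding rot_right_up_def using map_blocks_pf[OF rotLR_img, where g'="rotUR_pt (Suc k) l" and f=f] rotLR_UR rotUR_LR
  by (simp add: pf_def blocks_def upk_def lol_def)

lemma wordf_rot_right_down: "wordf k (Suc l) (\<lambda>x. f (rotLR_pt k (Suc l) x)) = wordf (Suc k) l f"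
proof -
  have "map (\<lambda>j. f (rotLR_pt k (Suc l) (Lo j))) [0..<l] = map (\<lambda>j. f (Lo j)) [0..<l]" by simp
  then show ?thesis by (simp add: wordf_def)
qed

lemma wordf_rot_right_up: "wordf (Suc k) l (\<lambda>x. f (rotUR_pt (Suc k) l x)) = wordf k (Suc l) f"
proof -
  have "map (\<lambda>j. f (rotUR_pt (Suc k) l (Up j))) [0..<k] = map (\<lambda>j. f (Up j)) [0..<k]" by simp
  then show ?thesis by (simp add: wordf_def)
qed


definition tf :: "nat \<Rightarrow> nat \<Rightarrow> (pt \<Rightarrow> nat) \<Rightarrow> (pt \<Rightarrow> nat) \<Rightarrow> pt \<Rightarrow> nat" where
  "tf k l f g x = (case x of Up i \<Rightarrow> if i < k then 2 * f (Up i) else Suc (2 * g (Up (i - k)))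
                           | Lo j \<Rightarrow> if j < l then 2 * f (Lo j) else Suc (2 * g (Lo (j - l))))"

lemma tensor_pf: "tensor (pf k l f) (pf k' l' g) = pf (k + k') (l + l') (tf k l f g)"
proof -
  let ?P = "points (k + k') (l + l')" and ?A = "points k l" and ?B = "points k' l'"
  let ?s = "shift_pt k l"
  let ?h = "tf k l f g"
  have PAB: "?P = ?A \<union> ?s ` ?B"
  proof
    show "?P \<subseteq> ?A \<union> ?s ` ?B"
    proof
      fix x assume x: "x \<in> ?P"
      show "x \<in> ?A \<union> ?s ` ?B"
      proof (cases x)
        case (Up i)
        show ?thesis
        proof (cases "i < k")
          case False
          then have "x = ?s (Up (i - k))" "Up (i - k) \<in> ?B" using Up x by auto
          then show ?thesis by blast
        qed (use Up in auto)
      next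
        case (Lo i)
        show ?thesis
        proof (cases "i < l")
          case False
          then have "x = ?s (Lo (i - l))" "Lo (i - l) \<in> ?B" using Lo x by auto
          then show ?thesis by blast
        qed (use Lo in auto)
      qed
    qed
    show "?A \<union> ?s ` ?B \<subseteq> ?P"
    proof
      fix x assume "x \<in> ?A \<union> ?s ` ?B"
      then show "x \<in> ?P"
      proof
        assume "x \<in> ?A" then show ?thesis by (cases x) auto
      next
        assume "x \<in> ?s ` ?B"
        then obtain y where "y \<in> ?B" "x = ?s y" by blast
        then show ?thesis by (cases y) auto
      qed
    qed
  qed
  have hA: "x \<in> ?A \<Longrightarrow> ?h x = 2 * f x" for x by (cases x) (auto simp: tf_def)
  have hB: "?h (?s y) = Suc (2 * g y)" for y by (cases y) (auto simp: tf_def)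
  have sinj: "?s y = ?s z \<Longrightarrow> y = z" for y z by (cases y; cases z) auto
  have oe: "Suc (2 * a) \<noteq> 2 * b" for a b :: nat by presburger
  have clA: "{y \<in> ?P. ?h y = ?h x} = {y \<in> ?A. f y = f x}" if x: "x \<in> ?A" for x
  proof -
    have yA: "y \<in> ?A" if yy: "y \<in> ?P" "?h y = ?h x" for y
    proof (rule ccontr)
      assume "y \<notin> ?A"
      then obtain z where "y = ?s z" using yy PAB by auto
      then have "?h y = Suc (2 * g z)" using hB by simp
      moreover have "?h x = 2 * f x" using hA[OF x] .
      ultimately show False using yy(2) oe by metis
    qed
    show ?thesis
    proof
      show "{y \<in> ?P. ?h y = ?h x} \<subseteq> {y \<in> ?A. f y = f x}" using yA hA x by fastforce
      show "{y \<in> ?A. f y = f x} \<subseteq> {y \<in> ?P. ?h y = ?h x}" using hA x PAB by auto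
    qed
  qed
  have clB: "{y \<in> ?P. ?h y = ?h (?s x)} = ?s ` {y \<in> ?B. g y = g x}" for x
  proof
    show "{y \<in> ?P. ?h y = ?h (?s x)} \<subseteq> ?s ` {y \<in> ?B. g y = g x}"
    proof
      fix y assume y: "y \<in> {y \<in> ?P. ?h y = ?h (?s x)}"
      have "y \<notin> ?A"
      proof
        assume "y \<in> ?A"
        then have "?h y = 2 * f y" by (rule hA)
        then have "2 * f y = Suc (2 * g x)" using y hB[of x] by simp
        then show False using oe[of "g x" "f y"] by simp
      qed
      then obtain z where "z \<in> ?B" "y = ?s z" using y PAB by auto
      then show "y \<in> ?s ` {y \<in> ?B. g y = g x}" using y hB by auto
    qed
    show "?s ` {y \<in> ?B. g y = g x} \<subseteq> {y \<in> ?P. ?h y = ?h (?s x)}"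
      using PAB hB by auto
  qed
  have "blocks (pf (k + k') (l + l') ?h) = (\<lambda>x. {y \<in> ?P. ?h y = ?h x}) ` ?A \<union> (\<lambda>x. {y \<in> ?P. ?h y = ?h x}) ` (?s ` ?B)"
    unfolding blocks_pf PAB[symmetric] using PAB by (simp add: image_Un)
  also have "\<dots> = blocks (pf k l f) \<union> map_blocks ?s (blocks (pf k' l' g))"
    unfolding blocks_pf map_blocks_def image_image using clA clB
    by (auto intro!: arg_cong2[where f="(\<union>)"] image_cong)
  finally show ?thesis
    by (simp add: tensor_def pf_def blocks_def upk_def lol_def)
qed

lemma wordf_tensor: "wordf (k + k') (l + l') (tf k l f g) =
   map (\<lambda>c. 2 * c) (map (\<lambda>i. f (Up i)) [0..<k]) @ map (\<lambda>c. Suc (2 * c)) (wordf k' l' g)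
   @ map (\<lambda>c. 2 * c) (rev (map (\<lambda>j. f (Lo j)) [0..<l]))"
proof -
  have u: "map (\<lambda>i. tf k l f g (Up i)) [0..<k + k'] =
     map (\<lambda>i. 2 * f (Up i)) [0..<k] @ map (\<lambda>i. Suc (2 * g (Up i))) [0..<k']"
    by (rule nth_equalityI) (auto simp: nth_append tf_def)
  have d: "map (\<lambda>j. tf k l f g (Lo j)) [0..<l + l'] =
     map (\<lambda>j. 2 * f (Lo j)) [0..<l] @ map (\<lambda>j. Suc (2 * g (Lo j))) [0..<l']"
    by (rule nth_equalityI) (auto simp: nth_append tf_def)
  show ?thesis unfolding wordf_def u d by (simp add: rev_map)
qed

section \<open>Composition\<close>

definition crel :: "part \<Rightarrow> part \<Rightarrow> (pt3 \<times> pt3) set" where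
  "crel p q = (same_block_rel emb_upper (blocks p) \<union> same_block_rel emb_lower (blocks q))\<^sup>*"

fun enc3 :: "pt3 \<Rightarrow> nat" where
  "enc3 (Top i) = 3 * i"
| "enc3 (Mid i) = 3 * i + 1"
| "enc3 (Bot i) = 3 * i + 2"

lemma enc3_inj: "enc3 a = enc3 b \<Longrightarrow> a = b"
  by (cases a; cases b; simp; presburger)

definition cmp :: "part \<Rightarrow> part \<Rightarrow> pt3 \<Rightarrow> nat" where
  "cmp p q z = (LEAST n. \<exists>z'. (z, z') \<in> crel p q \<and> enc3 z' = n)"

lemma sym_sbr: "sym (same_block_rel e B)"
  unfolding sym_def same_block_rel_def by blast

lemma crel_sym: "(a, b) \<in> crel p q \<Longrightarrow> (b, a) \<in> crel p q"
proof -
  have "sym (same_block_rel emb_upper (blocks p) \<union> same_block_rel emb_lower (blocks q))"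
    using sym_sbr sym_Un by blast
  then have "sym (crel p q)" unfolding crel_def by (rule sym_rtrancl)
  then show "(a, b) \<in> crel p q \<Longrightarrow> (b, a) \<in> crel p q" by (meson symD)
qed

lemma crel_trans: "(a, b) \<in> crel p q \<Longrightarrow> (b, c) \<in> crel p q \<Longrightarrow> (a, c) \<in> crel p q"
  unfolding crel_def by (rule rtrancl_trans)

lemma crel_refl: "(a, a) \<in> crel p q"
  unfolding crel_def by simp

lemma cmp_eq: "cmp p q a = cmp p q b \<longleftrightarrow> (a, b) \<in> crel p q"
proof
  assume ab: "(a, b) \<in> crel p q"
  have "(\<exists>z'. (a, z') \<in> crel p q \<and> enc3 z' = n) \<longleftrightarrow> (\<exists>z'. (b, z') \<in> crel p q \<and> enc3 z' = n)" for n
  proof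
    assume "\<exists>z'. (a, z') \<in> crel p q \<and> enc3 z' = n"
    then obtain z' where "(a, z') \<in> crel p q" "enc3 z' = n" by blast
    moreover then have "(b, z') \<in> crel p q" using crel_trans crel_sym ab by blast
    ultimately show "\<exists>z'. (b, z') \<in> crel p q \<and> enc3 z' = n" by blast
  next
    assume "\<exists>z'. (b, z') \<in> crel p q \<and> enc3 z' = n"
    then obtain z' where "(b, z') \<in> crel p q" "enc3 z' = n" by blast
    moreover then have "(a, z') \<in> crel p q" using crel_trans ab by blast
    ultimately show "\<exists>z'. (a, z') \<in> crel p q \<and> enc3 z' = n" by blast
  qed
  then show "cmp p q a = cmp p q b" unfolding cmp_def by simp
next
  assume e: "cmp p q a = cmp p q b"
  have ex: "\<exists>n z'. (z, z') \<in> crel p q \<and> enc3 z' = n" for z using crel_refl by blast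
  obtain za where za: "(a, za) \<in> crel p q" "enc3 za = cmp p q a"
    using LeastI_ex[OF ex[of a]] unfolding cmp_def by blast
  obtain zb where zb: "(b, zb) \<in> crel p q" "enc3 zb = cmp p q b"
    using LeastI_ex[OF ex[of b]] unfolding cmp_def by blast
  have "za = zb" using za zb e enc3_inj by simp
  then show "(a, b) \<in> crel p q" using za zb crel_sym crel_trans by blast
qed

lemma compose_pf: "compose p q = pf (upk p) (lol q) (\<lambda>x. cmp p q (emb_res x))"
proof -
  have "{y \<in> points (upk p) (lol q). (emb_res x, emb_res y) \<in> crel p q} =
        {y \<in> points (upk p) (lol q). cmp p q (emb_res y) = cmp p q (emb_res x)}" for x
  proof (rule Collect_cong)
    fix y
    have "(emb_res x, emb_res y) \<in> crel p q \<longleftrightarrow> cmp p q (emb_res y) = cmp p q (emb_res x)"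
      unfolding cmp_eq using crel_sym by metis
    then show "(y \<in> points (upk p) (lol q) \<and> (emb_res x, emb_res y) \<in> crel p q) =
          (y \<in> points (upk p) (lol q) \<and> cmp p q (emb_res y) = cmp p q (emb_res x))" by simp
  qed
  then show ?thesis
    unfolding compose_def pf_def Let_def crel_def[symmetric] by simp
qed

lemma sbr_pf: "same_block_rel e (blocks (pf k l f)) =
   {(e x, e y) | x y. x \<in> points k l \<and> y \<in> points k l \<and> f x = f y}"
proof
  show "same_block_rel e (blocks (pf k l f)) \<subseteq> {(e x, e y) | x y. x \<in> points k l \<and> y \<in> points k l \<and> f x = f y}"
  proof
    fix z assume "z \<in> same_block_rel e (blocks (pf k l f))"
    then obtain x y b where "z = (e x, e y)" "b \<in> blocks (pf k l f)" "x \<in> b" "y \<in> b"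
      unfolding same_block_rel_def by blast
    then have "x \<in> points k l \<and> y \<in> points k l \<and> f x = f y" unfolding blocks_pf by (auto simp del: Up_points Lo_points)
    then show "z \<in> {(e x, e y) | x y. x \<in> points k l \<and> y \<in> points k l \<and> f x = f y}"
      using \<open>z = (e x, e y)\<close> by blast
  qed
  show "{(e x, e y) | x y. x \<in> points k l \<and> y \<in> points k l \<and> f x = f y} \<subseteq> same_block_rel e (blocks (pf k l f))"
  proof
    fix z assume "z \<in> {(e x, e y) | x y. x \<in> points k l \<and> y \<in> points k l \<and> f x = f y}"
    then obtain x y where xy: "z = (e x, e y)" "x \<in> points k l" "y \<in> points k l" "f x = f y" by blast
    then have "{w \<in> points k l. f w = f x} \<in> blocks (pf k l f)" unfolding blocks_pf by blast
    moreover have "x \<in> {w \<in> points k l. f w = f x}" "y \<in> {w \<in> points k l. f w = f x}" using xy by auto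
    ultimately have "\<exists>b\<in>blocks (pf k l f). x \<in> b \<and> y \<in> b"
      by (intro bexI[of _ "{w \<in> points k l. f w = f x}"] conjI)
    then show "z \<in> same_block_rel e (blocks (pf k l f))" unfolding same_block_rel_def xy(1)
      by (intro CollectI exI[of _ x] exI[of _ y]) simp
  qed
qed


lemma points_0_2: "points 0 2 = {Lo 0, Lo 1}"
  by (auto simp: points_def lessThan_def less_Suc_eq numeral_2_eq_2)
lemma points_1_1: "points 1 1 = {Up 0, Lo 0}"
  by (auto simp: points_def)
lemma points_0_4: "points 0 4 = {Lo 0, Lo 1, Lo 2, Lo 3}"
  by (auto simp: points_def lessThan_def less_Suc_eq numeral_eq_Suc)
lemma points_3_3: "points 3 3 = {Up 0, Up 1, Up 2, Lo 0, Lo 1, Lo 2}"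
  by (auto simp: points_def lessThan_def less_Suc_eq numeral_eq_Suc)

lemma pf_const: "points k l \<noteq> {} \<Longrightarrow> pf k l (\<lambda>_. c) = (k, l, {points k l})"
  by (auto simp: pf_def)

lemma pair_part_pf: "pair_part = pf 0 2 (\<lambda>_. c)"
  by (simp add: pf_const points_0_2 pair_part_def)
lemma id_part_pf: "id_part = pf 1 1 (\<lambda>_. c)"
proof -
  have "Up 0 \<in> points 1 1" by simp
  then have "points 1 1 \<noteq> {}" by blast
  then show ?thesis unfolding id_part_def pf_const[of 1 1 c, OF \<open>points 1 1 \<noteq> {}\<close>] points_1_1 by simp
qed
lemma four_block_pf: "four_block = pf 0 4 (\<lambda>_. c)"
  by (simp add: pf_const points_0_4 four_block_def)

definition rho_f :: "pt \<Rightarrow> nat" where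
  "rho_f x = (case x of Up i \<Rightarrow> if i = 2 then 1 else 0 | Lo j \<Rightarrow> if j = 0 then 1 else 0)"

lemma pair_positioner_pf: "pair_positioner = pf 3 3 rho_f"
proof -
  have "(\<lambda>x. {y \<in> points 3 3. rho_f y = rho_f x}) ` points 3 3 = {{Up 0, Up 1, Lo 1, Lo 2}, {Up 2, Lo 0}}"
    unfolding points_3_3 by (auto simp: rho_f_def)
  then show ?thesis by (simp add: pf_def pair_positioner_def)
qed

definition ds_f :: "pt \<Rightarrow> nat" where "ds_f x = (case x of Lo j \<Rightarrow> j | Up i \<Rightarrow> 0)"

lemma double_singleton_pf: "double_singleton = pf 0 2 ds_f"
proof -
  have "(\<lambda>x. {y \<in> points 0 2. ds_f y = ds_f x}) ` points 0 2 = {{Lo 0}, {Lo 1}}"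
    unfolding points_0_2 by (auto simp: ds_f_def)
  then show ?thesis by (simp add: pf_def double_singleton_def)
qed


locale catp =
  fixes C :: "part set"
  assumes cat: "category_of_partitions C"
begin

lemma C_Parts: "C \<subseteq> Parts" using cat by (simp add: category_of_partitions_def)
lemma C_pair: "pair_part \<in> C" using cat by (simp add: category_of_partitions_def)
lemma C_id: "id_part \<in> C" using cat by (simp add: category_of_partitions_def)
lemma C_tensor: "p \<in> C \<Longrightarrow> q \<in> C \<Longrightarrow> tensor p q \<in> C" using cat by (simp add: category_of_partitions_def)
lemma C_compose: "p \<in> C \<Longrightarrow> q \<in> C \<Longrightarrow> lol p = upk q \<Longrightarrow> compose p q \<in> C"
  using cat by (simp add: category_of_partitions_def)
lemma C_inv: "p \<in> C \<Longrightarrow> involution p \<in> C" using cat by (simp add: category_of_partitions_def)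
lemma C_rld: "p \<in> C \<Longrightarrow> 0 < upk p \<Longrightarrow> rot_left_down p \<in> C" using cat by (simp add: category_of_partitions_def)
lemma C_rrd: "p \<in> C \<Longrightarrow> 0 < upk p \<Longrightarrow> rot_right_down p \<in> C" using cat by (simp add: category_of_partitions_def)
lemma C_rlu: "p \<in> C \<Longrightarrow> 0 < lol p \<Longrightarrow> rot_left_up p \<in> C" using cat by (simp add: category_of_partitions_def)
lemma C_rru: "p \<in> C \<Longrightarrow> 0 < lol p \<Longrightarrow> rot_right_up p \<in> C" using cat by (simp add: category_of_partitions_def)

definition W :: "nat list set" where "W = {xs. up xs \<in> C}"

lemma A0: "pf k l f \<in> C \<longleftrightarrow> wordf k l f \<in> W"
proof (induction l arbitrary: k f)
  case 0
  have "pf k 0 f = pf k 0 (lf k (wordf k 0 f))"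
    by (rule pf_cong) (auto simp: lf_def wordf_def points_def)
  then have "pf k 0 f = up (wordf k 0 f)" by (simp add: up_def)
  then show ?case by (simp add: W_def)
next
  case (Suc l)
  let ?g = "\<lambda>x. f (rotUR_pt (Suc k) l x)"
  have "pf k (Suc l) f \<in> C \<longleftrightarrow> pf (Suc k) l ?g \<in> C"
  proof
    assume "pf k (Suc l) f \<in> C"
    then show "pf (Suc k) l ?g \<in> C" using C_rru[of "pf k (Suc l) f"] by (simp add: rot_right_up_pf)
  next
    assume "pf (Suc k) l ?g \<in> C"
    then have "rot_right_down (pf (Suc k) l ?g) \<in> C" using C_rrd by simp
    moreover have "rot_right_down (pf (Suc k) l ?g) = pf k (Suc l) f"
      unfolding rot_right_down_pf by (rule pf_cong) (simp add: rotUR_LR)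
    ultimately show "pf k (Suc l) f \<in> C" by simp
  qed
  also have "\<dots> \<longleftrightarrow> wordf (Suc k) l ?g \<in> W" by (rule Suc.IH)
  finally show ?case by (simp add: wordf_rot_right_up)
qed

lemma W_pf: "xs \<in> W \<longleftrightarrow> pf k (length xs - k) (lf k xs) \<in> C" if "k \<le> length xs"
  using A0 wordf_lf[OF that] by simp

lemma W_rot1: "xs @ [a] \<in> W \<Longrightarrow> a # xs \<in> W"
proof -
  assume "xs @ [a] \<in> W"
  then have "pf 0 (Suc (length xs)) (lf 0 (xs @ [a])) \<in> C" using W_pf[of 0 "xs @ [a]"] by simp
  then have "rot_left_up (pf 0 (Suc (length xs)) (lf 0 (xs @ [a]))) \<in> C" using C_rlu by simp
  then have "pf 1 (length xs) (\<lambda>x. lf 0 (xs @ [a]) (rotUL_pt x)) \<in> C" by (simp add: rot_left_up_pf)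
  moreover have "wordf 0 (Suc (length xs)) (lf 0 (xs @ [a])) = xs @ [a]"
    using wordf_lf[of 0 "xs @ [a]"] by simp
  ultimately show "a # xs \<in> W" using A0 wordf_rot_left_up by fastforce
qed

lemma W_rot2: "a # xs \<in> W \<Longrightarrow> xs @ [a] \<in> W"
proof -
  assume "a # xs \<in> W"
  then have "pf 1 (length xs) (lf 1 (a # xs)) \<in> C" using W_pf[of 1 "a # xs"] by simp
  then have "rot_left_down (pf (Suc 0) (length xs) (lf 1 (a # xs))) \<in> C" using C_rld by simp
  then have "pf 0 (Suc (length xs)) (\<lambda>x. lf 1 (a # xs) (rotLU_pt x)) \<in> C" by (simp add: rot_left_down_pf)
  moreover have "wordf (Suc 0) (length xs) (lf 1 (a # xs)) = a # xs"
    using wordf_lf[of 1 "a # xs"] by simp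
  ultimately show "xs @ [a] \<in> W" using A0 wordf_rot_left_down by fastforce
qed

lemma W_rotate: "u @ v \<in> W \<Longrightarrow> v @ u \<in> W"
proof (induction u arbitrary: v)
  case Nil then show ?case by simp
next
  case (Cons a u)
  have "u @ v @ [a] \<in> W" using W_rot2[of a "u @ v"] Cons.prems by simp
  then have "(v @ [a]) @ u \<in> W" using Cons.IH[of "v @ [a]"] by simp
  then show ?case by simp
qed

lemma W_rev: "xs \<in> W \<Longrightarrow> rev xs \<in> W"
proof -
  assume "xs \<in> W"
  then have "pf 0 (length xs) (lf 0 xs) \<in> C" using W_pf[of 0 xs] by simp
  then have "involution (pf 0 (length xs) (lf 0 xs)) \<in> C" by (rule C_inv)
  then have "pf (length xs) 0 (\<lambda>x. lf 0 xs (flip_pt x)) \<in> C" by (simp add: involution_pf)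
  then show "rev xs \<in> W" using A0 wordf_involution wordf_lf[of 0 xs] by simp
qed

lemma W_tensor: "xs \<in> W \<Longrightarrow> ys \<in> W \<Longrightarrow> map (\<lambda>c. Suc (2 * c)) ys @ map (\<lambda>c. 2 * c) xs \<in> W"
proof -
  assume "xs \<in> W" "ys \<in> W"
  then have "pf 0 (length xs) (lf 0 xs) \<in> C" "pf 0 (length ys) (lf 0 ys) \<in> C"
    using W_pf[of 0] by auto
  then have "tensor (pf 0 (length xs) (lf 0 xs)) (pf 0 (length ys) (lf 0 ys)) \<in> C" by (rule C_tensor)
  then have "pf (0 + 0) (length xs + length ys) (tf 0 (length xs) (lf 0 xs) (lf 0 ys)) \<in> C"
    by (simp add: tensor_pf)
  then have "wordf (0 + 0) (length xs + length ys) (tf 0 (length xs) (lf 0 xs) (lf 0 ys)) \<in> W"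
    using A0 by blast
  moreover have "rev (map (\<lambda>j. lf 0 xs (Lo j)) [0..<length xs]) = xs"
    using wordf_lf[of 0 xs] by (simp add: wordf_def)
  moreover have "wordf (0 + 0) (length xs + length ys) (tf 0 (length xs) (lf 0 xs) (lf 0 ys)) =
     map (\<lambda>c. Suc (2 * c)) ys @ map (\<lambda>c. 2 * c) (rev (map (\<lambda>j. lf 0 xs (Lo j)) [0..<length xs]))"
    using wordf_tensor[of 0 0 "length xs" "length ys" "lf 0 xs" "lf 0 ys"] wordf_lf[of 0 ys] by simp
  ultimately show ?thesis by simp
qed

lemma W_relabel: "xs \<in> W \<Longrightarrow> inj_on h (set xs) \<Longrightarrow> map h xs \<in> W"
proof -
  assume xs: "xs \<in> W" and inj: "inj_on h (set xs)"
  have "pf 0 (length xs) (lf 0 xs) \<in> C" using xs W_pf[of 0 xs] by simp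
  moreover have "pf 0 (length xs) (lf 0 xs) = pf 0 (length xs) (\<lambda>x. h (lf 0 xs x))"
  proof (rule pf_cong)
    fix x y assume "x \<in> points 0 (length xs)" "y \<in> points 0 (length xs)"
    then have "lf 0 xs x \<in> set xs" "lf 0 xs y \<in> set xs"
      by (auto simp: lf_def points_def)
    then show "lf 0 xs x = lf 0 xs y \<longleftrightarrow> h (lf 0 xs x) = h (lf 0 xs y)" using inj by (auto dest: inj_onD)
  qed
  ultimately have "wordf 0 (length xs) (\<lambda>x. h (lf 0 xs x)) \<in> W" using A0 by simp
  then show ?thesis using wordf_comp[of 0 "length xs" h "lf 0 xs"] wordf_lf[of 0 xs] by simp
qed

lemma W_pair: "[c, c] \<in> W"
  using C_pair A0[of 0 2 "\<lambda>_. c"] by (simp add: pair_part_pf[of c] wordf_def numeral_2_eq_2)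

end


definition idf :: "pt \<Rightarrow> nat" where "idf x = (case x of Up i \<Rightarrow> i | Lo j \<Rightarrow> j)"

definition locL :: "nat list \<Rightarrow> (nat \<Rightarrow> nat) \<Rightarrow> nat list \<Rightarrow> pt \<Rightarrow> nat" where
  "locL w' f w x = (case x of Up i \<Rightarrow> w' ! i | Lo j \<Rightarrow> f (w ! j))"

context catp
begin

lemma ids_C: "pf k k idf \<in> C"
proof (induction k)
  case 0
  have inv: "involution pair_part = pf 2 0 (\<lambda>x. 0)"
    unfolding pair_part_pf[of 0] involution_pf by simp
  have "compose pair_part (involution pair_part) \<in> C"
    using C_compose[OF C_pair C_inv[OF C_pair]] inv by (simp add: pair_part_def lol_def)
  moreover have "compose pair_part (involution pair_part) = pf 0 0 idf"
  proof -
    have "upk pair_part = 0" "lol (involution pair_part) = 0"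
      by (simp_all add: pair_part_def upk_def lol_def involution_def)
    then have "compose pair_part (involution pair_part) = pf 0 0 (\<lambda>x. cmp pair_part (involution pair_part) (emb_res x))"
      by (simp add: compose_pf)
    also have "\<dots> = pf 0 0 idf" by (rule pf_cong) (simp add: points_def)
    finally show ?thesis .
  qed
  ultimately show ?case by simp
next
  case (Suc k)
  have "tensor (pf k k idf) (pf 1 1 (\<lambda>_. 0)) \<in> C"
    using C_tensor[OF Suc C_id] by (simp add: id_part_pf[of 0])
  moreover have "tensor (pf k k idf) (pf 1 1 (\<lambda>_. 0)) = pf (Suc k) (Suc k) idf"
  proof -
    have "pf (k + 1) (k + 1) (tf k k idf (\<lambda>_. 0)) = pf (k + 1) (k + 1) idf"
    proof (rule pf_cong)
      have tv: "tf k k idf (\<lambda>_. 0) z = (if idf z < k then 2 * idf z else 1) \<and> idf z \<le> k"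
        if "z \<in> points (k + 1) (k + 1)" for z
        using that by (cases z) (auto simp: tf_def idf_def)
      fix x y assume "x \<in> points (k + 1) (k + 1)" "y \<in> points (k + 1) (k + 1)"
      then show "tf k k idf (\<lambda>_. 0) x = tf k k idf (\<lambda>_. 0) y \<longleftrightarrow> idf x = idf y"
        using tv[of x] tv[of y] by (auto split: if_splits)
    qed
    then show ?thesis by (simp add: tensor_pf)
  qed
  ultimately show ?case by simp
qed

lemma LOC:
  assumes XC: "pf t s fX \<in> C"
    and xsW: "w @ v \<in> W" and lw: "length w = s" and lw': "length w' = t"
    and a: "\<And>x y. x \<in> points t s \<Longrightarrow> y \<in> points t s \<Longrightarrow> fX x = fX y \<Longrightarrow> locL w' f w x = locL w' f w y"
    and b: "\<And>i. i < t \<Longrightarrow> \<exists>j<s. fX (Up i) = fX (Lo j)"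
    and c: "\<And>c d. c \<in> set (w @ v) \<Longrightarrow> d \<in> set (w @ v) \<Longrightarrow> c \<noteq> d \<Longrightarrow> f c = f d \<Longrightarrow>
             \<exists>j1<s. \<exists>j2<s. w ! j1 = c \<and> w ! j2 = d \<and> fX (Lo j1) = fX (Lo j2)"
  shows "w' @ map f v \<in> W"
proof -
  define k where "k = length v"
  define xs where "xs = w @ v"
  define ys where "ys = w' @ map f v"
  define hr where "hr = tf t s fX idf"
  define hq where "hq = lf (s + k) xs"
  define r where "r = pf (t + k) (s + k) hr"
  define q where "q = pf (s + k) 0 hq"
  have lxs: "length xs = s + k" by (simp add: xs_def lw k_def)
  have lys: "length ys = t + k" by (simp add: ys_def lw' k_def)
  have rC: "r \<in> C" unfolding r_def hr_def using C_tensor[OF XC ids_C[of k]] by (simp add: tensor_pf)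
  have qC: "q \<in> C" unfolding q_def hq_def using W_pf[of "s + k" xs] xsW lxs by (simp add: xs_def)
  have cC: "compose r q \<in> C" using C_compose[OF rC qC] by (simp add: r_def q_def)
  define pos where "pos x = (case x of Up i \<Rightarrow> i - t | Lo j \<Rightarrow> j - s)" for x
  define gg where "gg z = (case z of Top i \<Rightarrow> ys ! i | Mid j \<Rightarrow> f (xs ! j) | Bot _ \<Rightarrow> 0)" for z
  have hr_eq: "hr x = (if x \<in> points t s then 2 * fX x else Suc (2 * pos x))"
    if "x \<in> points (t + k) (s + k)" for x
    using that by (cases x) (auto simp: hr_def tf_def pos_def idf_def)
  have gg_eq: "gg (emb_upper x) = (if x \<in> points t s then locL w' f w x else f (v ! pos x))"
    if "x \<in> points (t + k) (s + k)" for x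
    using that lw lw' by (cases x) (auto simp: gg_def locL_def pos_def ys_def xs_def nth_append k_def)
  have oe: "Suc (2 * a) \<noteq> 2 * b" for a b :: nat by presburger
  have key1: "gg (emb_upper x) = gg (emb_upper y)"
    if xy: "x \<in> points (t + k) (s + k)" "y \<in> points (t + k) (s + k)" "hr x = hr y" for x y
  proof (cases "x \<in> points t s")
    case True
    show ?thesis
    proof (cases "y \<in> points t s")
      case True
      then have "2 * fX x = 2 * fX y" using \<open>x \<in> points t s\<close> hr_eq[OF xy(1)] hr_eq[OF xy(2)] xy(3) by simp
      then have "fX x = fX y" by simp
      then have "locL w' f w x = locL w' f w y" using a[OF \<open>x \<in> points t s\<close> True] by simp
      then show ?thesis using True \<open>x \<in> points t s\<close> gg_eq[OF xy(1)] gg_eq[OF xy(2)] by simp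
    next
      case False
      then have "2 * fX x = Suc (2 * pos y)" using \<open>x \<in> points t s\<close> hr_eq[OF xy(1)] hr_eq[OF xy(2)] xy(3) by simp
      then show ?thesis using oe[of "pos y" "fX x"] by simp
    qed
  next
    case False
    show ?thesis
    proof (cases "y \<in> points t s")
      case True
      then have "2 * fX y = Suc (2 * pos x)" using False hr_eq[OF xy(1)] hr_eq[OF xy(2)] xy(3) by simp
      then show ?thesis using oe[of "pos x" "fX y"] by simp
    next
      case False
      then have "pos x = pos y" using \<open>x \<notin> points t s\<close> hr_eq[OF xy(1)] hr_eq[OF xy(2)] xy(3) by simp
      then show ?thesis using False \<open>x \<notin> points t s\<close> gg_eq[OF xy(1)] gg_eq[OF xy(2)] by simp
    qed
  qed
  let ?E1 = "same_block_rel emb_upper (blocks r)"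
  let ?E2 = "same_block_rel emb_lower (blocks q)"
  have E1: "?E1 = {(emb_upper x, emb_upper y) | x y. x \<in> points (t + k) (s + k) \<and> y \<in> points (t + k) (s + k) \<and> hr x = hr y}"
    unfolding r_def by (rule sbr_pf)
  have E2: "?E2 = {(emb_lower x, emb_lower y) | x y. x \<in> points (s + k) 0 \<and> y \<in> points (s + k) 0 \<and> hq x = hq y}"
    unfolding q_def by (rule sbr_pf)
  have edge: "gg a = gg b" if "(a, b) \<in> ?E1 \<union> ?E2" for a b
  proof -
    from that show ?thesis
    proof
      assume "(a, b) \<in> ?E1"
      then show ?thesis unfolding E1 using key1 by blast
    next
      assume "(a, b) \<in> ?E2"
      then obtain x y where "a = emb_lower x" "b = emb_lower y" "x \<in> points (s + k) 0" "y \<in> points (s + k) 0" "hq x = hq y"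
        unfolding E2 by blast
      then show ?thesis by (cases x; cases y) (auto simp: gg_def hq_def lf_def)
    qed
  qed
  have sound: "gg a = gg b" if "(a, b) \<in> crel r q" for a b
    using that unfolding crel_def
  proof (induction rule: rtrancl_induct)
    case base then show ?case by simp
  next
    case (step y z) then show ?case using edge by simp
  qed
  have E1I: "(emb_upper x, emb_upper y) \<in> crel r q"
    if "x \<in> points (t + k) (s + k)" "y \<in> points (t + k) (s + k)" "hr x = hr y" for x y
  proof -
    have "(emb_upper x, emb_upper y) \<in> ?E1" unfolding E1 using that
      by (intro CollectI exI[of _ x] exI[of _ y]) simp
    then show ?thesis unfolding crel_def by blast
  qed
  have E2I: "(Mid j, Mid j') \<in> crel r q" if "j < s + k" "j' < s + k" "xs ! j = xs ! j'" for j j'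
  proof -
    have "hq (Up j) = hq (Up j')" using that by (simp add: hq_def lf_def)
    then have "(emb_lower (Up j), emb_lower (Up j')) \<in> ?E2" unfolding E2 using that
      by (intro CollectI exI[of _ "Up j"] exI[of _ "Up j'"]) simp
    then show ?thesis unfolding crel_def by auto
  qed
  have T2M: "\<exists>j<s + k. (Top i, Mid j) \<in> crel r q" if i: "i < t + k" for i
  proof (cases "i < t")
    case True
    then obtain j where j: "j < s" "fX (Up i) = fX (Lo j)" using b by blast
    have "hr (Up i) = hr (Lo j)" using hr_eq[of "Up i"] hr_eq[of "Lo j"] j True by simp
    then have "(emb_upper (Up i), emb_upper (Lo j)) \<in> crel r q" using j True by (intro E1I) auto
    then show ?thesis using j by (intro exI[of _ j]) auto
  next
    case False
    have "hr (Up i) = hr (Lo (s + (i - t)))"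
      using hr_eq[of "Up i"] hr_eq[of "Lo (s + (i - t))"] False i by (simp add: pos_def)
    then have "(emb_upper (Up i), emb_upper (Lo (s + (i - t)))) \<in> crel r q" using False i by (intro E1I) auto
    then show ?thesis using False i by (intro exI[of _ "s + (i - t)"]) auto
  qed
  have M2M: "(Mid j, Mid j') \<in> crel r q" if jj: "j < s + k" "j' < s + k" "f (xs ! j) = f (xs ! j')" for j j'
  proof (cases "xs ! j = xs ! j'")
    case True then show ?thesis using E2I jj by simp
  next
    case False
    have "xs ! j \<in> set xs" "xs ! j' \<in> set xs" using jj lxs by auto
    then obtain j1 j2 where j12: "j1 < s" "j2 < s" "w ! j1 = xs ! j" "w ! j2 = xs ! j'" "fX (Lo j1) = fX (Lo j2)"
      using c[of "xs ! j" "xs ! j'"] False jj unfolding xs_def by blast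
    have x1: "xs ! j1 = w ! j1" "xs ! j2 = w ! j2" using j12 lw by (auto simp: xs_def nth_append)
    have "(Mid j, Mid j1) \<in> crel r q" using E2I[of j j1] jj j12 x1 by simp
    moreover have "(Mid j1, Mid j2) \<in> crel r q"
    proof -
      have "hr (Lo j1) = hr (Lo j2)" using hr_eq[of "Lo j1"] hr_eq[of "Lo j2"] j12 by simp
      then show ?thesis using E1I[of "Lo j1" "Lo j2"] j12 by simp
    qed
    moreover have "(Mid j2, Mid j') \<in> crel r q" using E2I[of j2 j'] jj j12 x1 by simp
    ultimately show ?thesis using crel_trans by blast
  qed
  have iff: "(Top i, Top i') \<in> crel r q \<longleftrightarrow> ys ! i = ys ! i'" if ii: "i < t + k" "i' < t + k" for i i'
  proof
    assume "(Top i, Top i') \<in> crel r q"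
    then have "gg (Top i) = gg (Top i')" by (rule sound)
    then show "ys ! i = ys ! i'" by (simp add: gg_def)
  next
    assume eq: "ys ! i = ys ! i'"
    obtain j where j: "j < s + k" "(Top i, Mid j) \<in> crel r q" using T2M ii by blast
    obtain j' where j': "j' < s + k" "(Top i', Mid j') \<in> crel r q" using T2M ii by blast
    have "gg (Top i) = gg (Mid j)" "gg (Top i') = gg (Mid j')" using sound[OF j(2)] sound[OF j'(2)] .
    then have "f (xs ! j) = f (xs ! j')" using eq by (simp add: gg_def)
    then have "(Mid j, Mid j') \<in> crel r q" using M2M j j' by simp
    then show "(Top i, Top i') \<in> crel r q" using j j' crel_trans crel_sym by meson
  qed
  have "compose r q = pf (t + k) 0 (lf (t + k) ys)"
  proof -
    have "compose r q = pf (t + k) 0 (\<lambda>x. cmp r q (emb_res x))" by (simp add: compose_pf r_def q_def)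
    also have "\<dots> = pf (t + k) 0 (lf (t + k) ys)"
    proof (rule pf_cong)
      fix x y assume "x \<in> points (t + k) 0" "y \<in> points (t + k) 0"
      then obtain i i' where "x = Up i" "y = Up i'" "i < t + k" "i' < t + k"
        by (auto simp: points_def)
      then show "cmp r q (emb_res x) = cmp r q (emb_res y) \<longleftrightarrow> lf (t + k) ys x = lf (t + k) ys y"
        using iff cmp_eq by (simp add: lf_def)
    qed
    finally show ?thesis .
  qed
  then have "pf (t + k) 0 (lf (t + k) ys) \<in> C" using cC by simp
  then have "ys \<in> W" using W_pf[of "t + k" ys] lys by simp
  then show ?thesis by (simp add: ys_def)
qed

end


locale shcat = catp +
  assumes fb: "four_block \<in> C" and rho: "pair_positioner \<in> C"
begin

lemma rlu_const: "pf k (Suc l) (\<lambda>_. 0) \<in> C \<Longrightarrow> pf (Suc k) l (\<lambda>_. 0) \<in> C"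
  using C_rlu[of "pf k (Suc l) (\<lambda>_. 0)"] by (simp add: rot_left_up_pf)

lemma fb4: "pf 0 (Suc (Suc (Suc (Suc 0)))) (\<lambda>_. 0) \<in> C"
  using fb four_block_pf[of 0] by (simp add: numeral_eq_Suc)

lemma X31: "pf 3 1 (\<lambda>_. 0) \<in> C"
  using rlu_const[OF rlu_const[OF rlu_const[OF fb4]]] by (simp add: numeral_eq_Suc)

lemma X22: "pf 2 2 (\<lambda>_. 0) \<in> C"
  using rlu_const[OF rlu_const[OF fb4]] by (simp add: numeral_eq_Suc)

lemma cap_pre: "[c, c] @ v \<in> W \<Longrightarrow> v \<in> W"
proof -
  assume h: "[c, c] @ v \<in> W"
  have X: "pf 0 2 (\<lambda>_. 0) \<in> C" using C_pair pair_part_pf[of 0] by simp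
  have "[] @ map id v \<in> W"
  proof (rule LOC[OF X h])
    fix x z assume "x \<in> points 0 2" "z \<in> points 0 2"
    then have "locL [] id [c, c] x = c" "locL [] id [c, c] z = c"
      by (auto simp: locL_def points_0_2)
    then show "locL [] id [c, c] x = locL [] id [c, c] z" by simp
  qed auto
  then show ?thesis by simp
qed

lemma dup_pre: "[y] @ v \<in> W \<Longrightarrow> [y, y, y] @ v \<in> W"
proof -
  assume h: "[y] @ v \<in> W"
  have "[y, y, y] @ map id v \<in> W"
  proof (rule LOC[OF X31 h])
    show "\<And>x z. x \<in> points 3 1 \<Longrightarrow> z \<in> points 3 1 \<Longrightarrow> 0 = 0 \<Longrightarrow> locL [y, y, y] id [y] x = locL [y, y, y] id [y] z"
    proof -
      fix x z assume "x \<in> points 3 1" "z \<in> points 3 1"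
      then have "locL [y, y, y] id [y] x = y" "locL [y, y, y] id [y] z = y"
        by (auto simp: locL_def points_def nth_Cons' numeral_eq_Suc less_Suc_eq)
      then show "locL [y, y, y] id [y] x = locL [y, y, y] id [y] z" by simp
    qed
  qed auto
  then show ?thesis by simp
qed

lemma merge_pre: "[a, b] @ v \<in> W \<Longrightarrow> map (\<lambda>x. if x = b then a else x) ([a, b] @ v) \<in> W"
proof -
  assume h: "[a, b] @ v \<in> W"
  let ?f = "\<lambda>x. if x = b then a else x"
  have "[a, a] @ map ?f v \<in> W"
  proof (rule LOC[OF X22 h])
    fix x z assume "x \<in> points 2 2" "z \<in> points 2 2"
    then have "locL [a, a] ?f [a, b] x = a" "locL [a, a] ?f [a, b] z = a"
      by (auto simp: locL_def points_def nth_Cons' numeral_eq_Suc less_Suc_eq)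
    then show "locL [a, a] ?f [a, b] x = locL [a, a] ?f [a, b] z" by simp
  next
    fix c d assume "c \<noteq> d" "?f c = ?f d"
    then have cd: "(c = a \<and> d = b) \<or> (c = b \<and> d = a)" by (auto split: if_splits)
    show "\<exists>j1<2. \<exists>j2<2. [a, b] ! j1 = c \<and> [a, b] ! j2 = d \<and> (0::nat) = 0"
    proof (cases "c = a \<and> d = b")
      case True
      then have "[a, b] ! 0 = c" "[a, b] ! 1 = d" "0 < (2::nat)" "1 < (2::nat)" by auto
      then show ?thesis by blast
    next
      case False
      then have "[a, b] ! 1 = c" "[a, b] ! 0 = d" "0 < (2::nat)" "1 < (2::nat)" using cd by auto
      then show ?thesis by blast
    qed
  qed auto
  then show ?thesis by simp
qed

lemma move_pre: "[c, y, y] @ v \<in> W \<Longrightarrow> [y, y, c] @ v \<in> W"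
proof -
  assume h: "[c, y, y] @ v \<in> W"
  have X: "pf 3 3 rho_f \<in> C" using rho pair_positioner_pf by simp
  have "[y, y, c] @ map id v \<in> W"
  proof (rule LOC[OF X h])
    fix x z assume "x \<in> points 3 3" "z \<in> points 3 3" "rho_f x = rho_f z"
    then show "locL [y, y, c] id [c, y, y] x = locL [y, y, c] id [c, y, y] z"
      unfolding points_3_3 by (auto simp: locL_def rho_f_def)
  next
    fix i :: nat assume "i < 3"
    then have "i = 0 \<or> i = 1 \<or> i = 2" by auto
    then show "\<exists>j<3. rho_f (Up i) = rho_f (Lo j)"
      by (elim disjE) (rule exI[of _ 1] exI[of _ 0]; simp add: rho_f_def)+
  qed auto
  then show ?thesis by simp
qed

lemma move_back_pre: "[y, y, c] @ v \<in> W \<Longrightarrow> [c, y, y] @ v \<in> W"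
proof -
  assume h: "[y, y, c] @ v \<in> W"
  have X: "pf 3 3 (\<lambda>x. rho_f (flip_pt x)) \<in> C"
    using C_inv[OF rho] unfolding pair_positioner_pf involution_pf .
  have "[c, y, y] @ map id v \<in> W"
  proof (rule LOC[OF X h])
    fix x z assume "x \<in> points 3 3" "z \<in> points 3 3" "rho_f (flip_pt x) = rho_f (flip_pt z)"
    then show "locL [c, y, y] id [y, y, c] x = locL [c, y, y] id [y, y, c] z"
      unfolding points_3_3 by (auto simp: locL_def rho_f_def)
  next
    fix i :: nat assume "i < 3"
    then have "i = 0 \<or> i = 1 \<or> i = 2" by auto
    then show "\<exists>j<3. rho_f (flip_pt (Up i)) = rho_f (flip_pt (Lo j))"
      by (elim disjE) (rule exI[of _ 2] exI[of _ 0]; simp add: rho_f_def)+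
  qed auto
  then show ?thesis by simp
qed

end


context shcat
begin

lemma gen_pos: "(\<And>v. s1 @ v \<in> W \<Longrightarrow> s2 @ v \<in> W) \<Longrightarrow> u @ s1 @ v \<in> W \<Longrightarrow> u @ s2 @ v \<in> W"
proof -
  assume op: "\<And>v. s1 @ v \<in> W \<Longrightarrow> s2 @ v \<in> W" and h: "u @ s1 @ v \<in> W"
  have "(s1 @ v) @ u \<in> W" using W_rotate[OF h] .
  then have "s2 @ (v @ u) \<in> W" using op by simp
  then have "(s2 @ v) @ u \<in> W" by simp
  then show ?thesis using W_rotate by fastforce
qed

lemma cap: "u @ [c, c] @ v \<in> W \<Longrightarrow> u @ v \<in> W"
  using gen_pos[of "[c, c]" "[]"] cap_pre by auto

lemma dup: "u @ [y] @ v \<in> W \<Longrightarrow> u @ [y, y, y] @ v \<in> W"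
  using gen_pos[of "[y]" "[y, y, y]"] dup_pre by auto

lemma move_back: "u @ [y, y, c] @ v \<in> W \<Longrightarrow> u @ [c, y, y] @ v \<in> W"
  using gen_pos[of "[y, y, c]" "[c, y, y]"] move_back_pre by auto

lemma merge_adj: "u @ [a, b] @ v \<in> W \<Longrightarrow> map (\<lambda>x. if x = b then a else x) (u @ [a, b] @ v) \<in> W"
proof -
  let ?f = "\<lambda>x. if x = b then a else x"
  assume "u @ [a, b] @ v \<in> W"
  then have "[a, b] @ (v @ u) \<in> W" using W_rotate by fastforce
  then have "map ?f ([a, b] @ v) @ map ?f u \<in> W" using merge_pre by fastforce
  then have "map ?f u @ map ?f ([a, b] @ v) \<in> W" by (rule W_rotate)
  then show ?thesis by simp
qed

lemma movepair_right: "u @ [y, y] @ m @ v \<in> W \<Longrightarrow> u @ m @ [y, y] @ v \<in> W"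
proof (induction m arbitrary: u)
  case Nil then show ?case by simp
next
  case (Cons c m)
  have "u @ [y, y, c] @ (m @ v) \<in> W" using Cons.prems by simp
  then have "u @ [c, y, y] @ (m @ v) \<in> W" by (rule move_back)
  then have "(u @ [c]) @ [y, y] @ m @ v \<in> W" by simp
  then have "(u @ [c]) @ m @ [y, y] @ v \<in> W" by (rule Cons.IH)
  then show ?case by simp
qed

lemma merge_any:
  assumes xs: "xs \<in> W" and a: "a \<in> set xs" and b: "b \<in> set xs"
  shows "map (\<lambda>x. if x = b then a else x) xs \<in> W"
proof (cases "a = b")
  case True
  then have "map (\<lambda>x. if x = b then a else x) xs = xs" by (induction xs) auto
  then show ?thesis using xs by simp
next
  case False
  let ?f = "\<lambda>x. if x = b then a else x"
  obtain u r where ur: "xs = u @ b # r" using b by (meson split_list)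
  define zs where "zs = r @ u"
  have h1: "[b] @ zs \<in> W" using W_rotate[of u "b # r"] xs ur by (simp add: zs_def)
  have "a \<in> set zs" using a ur False by (auto simp: zs_def)
  then obtain z1 z2 where z: "zs = z1 @ a # z2" by (meson split_list)
  have "[] @ [b, b, b] @ zs \<in> W" using dup[of "[]" b zs] h1 by simp
  then have "[b] @ [b, b] @ (z1 @ [a]) @ z2 \<in> W" using z by simp
  then have "[b] @ (z1 @ [a]) @ [b, b] @ z2 \<in> W" by (rule movepair_right)
  then have "(b # z1) @ [a, b] @ (b # z2) \<in> W" by simp
  then have "map ?f ((b # z1) @ [a, b] @ (b # z2)) \<in> W" by (rule merge_adj)
  then have "(a # map ?f z1) @ [a, a] @ (a # map ?f z2) \<in> W" using False by simp
  then have "(a # map ?f z1) @ (a # map ?f z2) \<in> W" by (rule cap)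
  moreover have "(a # map ?f z1) @ (a # map ?f z2) = map ?f (b # r) @ map ?f u"
  proof -
    have "(a # map ?f z1) @ (a # map ?f z2) = map ?f (b # z1 @ a # z2)" using False by simp
    also have "\<dots> = map ?f (b # zs)" using z by simp
    finally show ?thesis by (simp add: zs_def)
  qed
  ultimately have "map ?f (b # r) @ map ?f u \<in> W" by simp
  then have "map ?f u @ map ?f (b # r) \<in> W" by (rule W_rotate)
  then show ?thesis using ur by simp
qed

lemma map_any: "xs \<in> W \<Longrightarrow> map h xs \<in> W"
proof (induction "card (set xs)" arbitrary: xs rule: less_induct)
  case less
  show ?case
  proof (cases "inj_on h (set xs)")
    case True then show ?thesis using W_relabel less.prems by simp
  next
    case False
    then obtain a b where ab: "a \<in> set xs" "b \<in> set xs" "a \<noteq> b" "h a = h b"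
      unfolding inj_on_def by blast
    let ?f = "\<lambda>x. if x = b then a else x"
    have w: "map ?f xs \<in> W" using merge_any[OF less.prems ab(1,2)] .
    have "set (map ?f xs) \<subseteq> set xs - {b}" using ab by auto
    then have "card (set (map ?f xs)) < card (set xs)"
      using ab(2) by (meson card_Diff1_less List.finite_set finite_Diff le_less_trans card_mono)
    then have "map h (map ?f xs) \<in> W" using less.hyps w by blast
    moreover have "map h (map ?f xs) = map h xs" using ab by (auto intro: map_cong)
    ultimately show ?thesis by metis
  qed
qed

lemma W_concat: "xs \<in> W \<Longrightarrow> ys \<in> W \<Longrightarrow> xs @ ys \<in> W"
proof -
  assume "xs \<in> W" "ys \<in> W"
  then have "map (\<lambda>c. Suc (2 * c)) ys @ map (\<lambda>c. 2 * c) xs \<in> W" by (rule W_tensor)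
  then have "map (\<lambda>c. c div 2) (map (\<lambda>c. Suc (2 * c)) ys @ map (\<lambda>c. 2 * c) xs) \<in> W" by (rule map_any)
  then have "ys @ xs \<in> W" by (simp add: comp_def)
  then show ?thesis by (rule W_rotate)
qed

lemma ins: "u @ v \<in> W \<Longrightarrow> u @ [x, x] @ v \<in> W"
proof -
  assume "u @ v \<in> W"
  then have "v @ u \<in> W" by (rule W_rotate)
  then have "([x, x] @ v) @ u \<in> W" using W_concat[OF W_pair] by simp
  then show ?thesis using W_rotate by fastforce
qed

lemma W_red_aux: "u @ xs \<in> W \<longleftrightarrow> u @ red xs \<in> W"
proof (induction xs arbitrary: u)
  case Nil then show ?case by simp
next
  case (Cons x xs)
  have "u @ x # xs \<in> W \<longleftrightarrow> (u @ [x]) @ red xs \<in> W" using Cons.IH[of "u @ [x]"] by simp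
  also have "\<dots> \<longleftrightarrow> u @ red (x # xs) \<in> W"
  proof (cases "\<exists>w. red xs = x # w")
    case True
    then obtain w where w: "red xs = x # w" by blast
    then have "red (x # xs) = w" by (simp add: red_Cons cr_def)
    then show ?thesis using w cap[of u x w] ins[of u w x] by auto
  next
    case False
    then have "red (x # xs) = x # red xs" by (auto simp: red_Cons cr_def split: list.splits)
    then show ?thesis by simp
  qed
  finally show ?case .
qed

lemma W_red: "xs \<in> W \<longleftrightarrow> red xs \<in> W"
  using W_red_aux[of "[]"] by simp

lemma W_nil: "[] \<in> W"
  using cap[of "[]" 0 "[]"] W_pair[of 0] by simp

end


locale shocat = shcat +
  assumes ds: "double_singleton \<notin> C"
begin

lemma W_two: "a \<noteq> b \<Longrightarrow> [a, b] \<notin> W"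
proof
  assume ab: "a \<noteq> b" and w: "[a, b] \<in> W"
  define h where "h x = (if x = a then 1 else (0::nat))" for x
  have "inj_on h (set [a, b])" using ab by (auto simp: h_def inj_on_def)
  then have "map h [a, b] \<in> W" using W_relabel w by blast
  then have "[1, 0] \<in> W" using ab by (simp add: h_def)
  then have "pf 0 (length [1::nat, 0]) (lf 0 [1, 0]) \<in> C" using W_pf[of 0 "[1, 0]"] by simp
  then have "pf 0 2 (lf 0 [1, 0]) \<in> C" by (simp add: numeral_2_eq_2)
  moreover have "pf 0 2 (lf 0 [1, 0]) = pf 0 2 ds_f"
    by (rule pf_cong) (auto simp: points_0_2 lf_def ds_f_def)
  ultimately show False using ds double_singleton_pf by simp
qed

lemma rep_single: "replicate (Suc (2 * m)) c \<in> W \<Longrightarrow> [c] \<in> W"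
proof (induction m)
  case 0 then show ?case by simp
next
  case (Suc m)
  have "[c, c] @ replicate (Suc (2 * m)) c \<in> W" using Suc.prems by (simp add: numeral_eq_Suc)
  then show ?case using cap_pre Suc.IH by blast
qed

lemma W_even: "xs \<in> W \<Longrightarrow> even (length xs)"
proof (rule ccontr)
  assume xs: "xs \<in> W" and odd: "\<not> even (length xs)"
  then obtain m where m: "length xs = Suc (2 * m)" by (metis oddE Suc_eq_plus1)
  have "map (\<lambda>_. 0::nat) xs \<in> W" using map_any xs by blast
  moreover have "map (\<lambda>_. 0::nat) xs = replicate (Suc (2 * m)) 0" using m by (simp add: map_replicate_const)
  ultimately have "[0] \<in> W" using rep_single by simp
  then have "map (\<lambda>c. Suc (2 * c)) [0] @ map (\<lambda>c. 2 * c) [0] \<in> W" using W_tensor by blast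
  then have "[1, 0] \<in> W" by simp
  then show False using W_two[of 1 0] by simp
qed

lemma Fcat_eq: "Fcat C = {xs \<in> W. reduced xs}"
proof
  show "Fcat C \<subseteq> {xs \<in> W. reduced xs}"
  proof
    fix z assume "z \<in> Fcat C"
    then obtain p lab where p: "z = piw (word p lab)" "p \<in> C" "labelling p lab" unfolding Fcat_def by blast
    have "p \<in> Parts" using p C_Parts by blast
    then have "p = pf (upk p) (lol p) (\<lambda>x. lab (block_of p x))" using Parts_pf p by blast
    then have "wordf (upk p) (lol p) (\<lambda>x. lab (block_of p x)) \<in> W" using A0 p(2) by metis
    then have "red (word p lab) \<in> W" using W_red by (simp add: word_wordf)
    then show "z \<in> {xs \<in> W. reduced xs}" using p by (simp add: piw_red)
  qed
  show "{xs \<in> W. reduced xs} \<subseteq> Fcat C"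
  proof
    fix xs assume xs: "xs \<in> {xs \<in> W. reduced xs}"
    then have "up xs \<in> C" by (simp add: W_def)
    moreover obtain lab where "labelling (up xs) lab" "word (up xs) lab = xs"
      using pf_labelling[of "length xs" 0 "lf (length xs) xs"] wordf_up unfolding up_def by metis
    moreover have "piw (word (up xs) lab) = xs" using xs \<open>word (up xs) lab = xs\<close> by (simp add: piw_red red_reduced)
    ultimately show "xs \<in> Fcat C" unfolding Fcat_def
      by (intro CollectI exI[of _ "up xs"] exI[of _ lab]) auto
  qed
qed

lemma Fcat_proper: "proper_S0_inv_subgroup_of_E (Fcat C)"
proof -
  have sg: "subgroup (Fcat C) Z2free"
  proof
    show "Fcat C \<subseteq> carrier Z2free" by (auto simp: Fcat_eq)
    show "\<one>\<^bsub>Z2free\<^esub> \<in> Fcat C" by (simp add: Fcat_eq W_nil)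
    fix x y assume x: "x \<in> Fcat C" and y: "y \<in> Fcat C"
    then show "x \<otimes>\<^bsub>Z2free\<^esub> y \<in> Fcat C" using W_concat W_red by (simp add: Fcat_eq)
    show "inv\<^bsub>Z2free\<^esub> x \<in> Fcat C" using x W_rev by (simp add: Fcat_eq Z2_inv reduced_rev)
  qed
  have sub: "Fcat C \<subseteq> Ev" by (auto simp: Fcat_eq Ev_def W_even)
  have ne: "Fcat C \<noteq> Ev"
  proof
    assume "Fcat C = Ev"
    moreover have "[0, 1] \<in> Ev" by (simp add: Ev_def reduced_def)
    ultimately have "[0, 1] \<in> {xs \<in> W. reduced xs}" by (simp add: Fcat_eq)
    then have "[0, 1] \<in> W" by blast
    then show False using W_two[of 0 1] by simp
  qed
  have inv: "S0_invariant (Fcat C)"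
    unfolding S0_invariant_def
  proof
    fix \<phi> assume "\<phi> \<in> S0"
    then show "\<phi> ` Fcat C \<subseteq> Fcat C"
    proof (induction rule: S0.induct)
      case (gen_subst n idx)
      show ?case
      proof
        fix z assume "z \<in> subst_endo n idx ` Fcat C"
        then obtain xs where "z = subst_endo n idx xs" "xs \<in> W" unfolding Fcat_eq by blast
        then show "z \<in> Fcat C" unfolding Fcat_eq subst_endo_def piw_red using map_any W_red by simp
      qed
    next
      case (gen_conj k)
      show ?case
      proof
        fix z assume "z \<in> conj_endo k ` Fcat C"
        then obtain xs where z: "z = conj_endo k xs" "xs \<in> W" unfolding Fcat_eq by blast
        have "[k, k] @ xs \<in> W" using W_concat[OF W_pair z(2)] .
        then have "[k] @ ([k] @ xs) \<in> W" by simp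
        then have "([k] @ xs) @ [k] \<in> W" by (rule W_rotate)
        then have "red ([k] @ xs @ [k]) \<in> W" using W_red by simp
        moreover have "z = red ([k] @ xs @ [k])"
          using z by (simp add: conj_endo_def red_append_left)
        ultimately show "z \<in> Fcat C" by (simp add: Fcat_eq)
      qed
    next
      case (comp \<phi> \<psi>)
      then show ?case by (auto simp: image_comp[symmetric])
    qed
  qed
  show ?thesis unfolding proper_S0_inv_subgroup_of_E_def using sg sub ne inv by blast
qed

lemma CH_Fcat: "CH (Fcat C) = C"
proof
  show "CH (Fcat C) \<subseteq> C"
  proof
    fix p assume "p \<in> CH (Fcat C)"
    then obtain lab where p: "p \<in> Parts" "labelling p lab" "piw (word p lab) \<in> Fcat C"
      unfolding CH_def by blast
    then have "red (word p lab) \<in> W" by (simp add: Fcat_eq piw_red)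
    then have "wordf (upk p) (lol p) (\<lambda>x. lab (block_of p x)) \<in> W" using W_red by (simp add: word_wordf)
    then have "pf (upk p) (lol p) (\<lambda>x. lab (block_of p x)) \<in> C" using A0 by blast
    then show "p \<in> C" using Parts_pf[OF p(1,2)] by simp
  qed
  show "C \<subseteq> CH (Fcat C)"
  proof
    fix p assume pC: "p \<in> C"
    then have P: "p \<in> Parts" using C_Parts by blast
    then obtain lab where lab: "labelling p lab" using Parts_labelling_ex by blast
    have "pf (upk p) (lol p) (\<lambda>x. lab (block_of p x)) \<in> C" using Parts_pf[OF P lab] pC by simp
    then have "word p lab \<in> W" using A0 by (simp add: word_wordf)
    then have "piw (word p lab) \<in> Fcat C" using W_red by (simp add: Fcat_eq piw_red)
    then show "p \<in> CH (Fcat C)" unfolding CH_def using P lab by blast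
  qed
qed

end


lemma red_rev: "red (rev xs) = rev (red xs)"
proof -
  have g: "group Z2free" by (rule group_Z2)
  have "inv\<^bsub>Z2free\<^esub> (red xs) = red (rev xs)"
    by (rule group.inv_equality[OF g]) (auto simp: red_append_left red_append_right red_rev_self)
  moreover have "inv\<^bsub>Z2free\<^esub> (red xs) = rev (red xs)" by (simp add: Z2_inv)
  ultimately show ?thesis by simp
qed

lemma factor_fun:
  assumes "\<And>x y. x \<in> P \<Longrightarrow> y \<in> P \<Longrightarrow> g' x = g' y \<Longrightarrow> g x = g y"
  shows "\<exists>h. \<forall>x\<in>P. g x = h (g' x)"
proof -
  define h where "h c = g (SOME x. x \<in> P \<and> g' x = c)" for c
  have "g x = h (g' x)" if x: "x \<in> P" for x
  proof -
    have "\<exists>y. y \<in> P \<and> g' y = g' x" using x by blast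
    then have "(SOME y. y \<in> P \<and> g' y = g' x) \<in> P \<and> g' (SOME y. y \<in> P \<and> g' y = g' x) = g' x"
      by (rule someI_ex)
    then show ?thesis using assms x unfolding h_def by metis
  qed
  then show ?thesis by blast
qed

lemma pf_eq_imp:
  assumes e: "pf k l g = pf k l g'" and x: "x \<in> points k l" and y: "y \<in> points k l" and gy: "g' x = g' y"
  shows "g x = g y"
proof -
  have "{z \<in> points k l. g' z = g' x} \<in> blocks (pf k l g')" using x by (auto simp: blocks_pf)
  then have "{z \<in> points k l. g' z = g' x} \<in> blocks (pf k l g)" using e by simp
  then obtain w where w: "w \<in> points k l" "{z \<in> points k l. g' z = g' x} = {z \<in> points k l. g z = g w}"
    by (auto simp: blocks_pf)
  have "x \<in> {z \<in> points k l. g' z = g' x}" "y \<in> {z \<in> points k l. g' z = g' x}" using x y gy by auto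
  then show ?thesis using w by auto
qed

locale Hsub =
  fixes H :: "nat list set"
  assumes pr: "proper_S0_inv_subgroup_of_E H"
begin

lemma sg: "subgroup H Z2free" using pr by (simp add: proper_S0_inv_subgroup_of_E_def)
lemma H_Ev: "H \<subseteq> Ev" using pr by (simp add: proper_S0_inv_subgroup_of_E_def)
lemma H_ne: "H \<noteq> Ev" using pr by (simp add: proper_S0_inv_subgroup_of_E_def)
lemma H_inv: "S0_invariant H" using pr by (simp add: proper_S0_inv_subgroup_of_E_def)

lemma H_red: "x \<in> H \<Longrightarrow> reduced x" using H_Ev by (auto simp: Ev_def)
lemma H_nil: "[] \<in> H" using subgroup.one_closed[OF sg] by simp
lemma H_mult: "x \<in> H \<Longrightarrow> y \<in> H \<Longrightarrow> red (x @ y) \<in> H" using subgroup.m_closed[OF sg] by simp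

lemma H_map: "x \<in> H \<Longrightarrow> red (map h x) \<in> H"
proof -
  assume x: "x \<in> H"
  define n where "n = Suc (Max (insert 0 (set x)))"
  have lt: "c \<in> set x \<Longrightarrow> c < n" for c unfolding n_def by (simp add: le_imp_less_Suc)
  have "subst_endo n h \<in> S0" by (rule S0.gen_subst)
  then have "subst_endo n h x \<in> H" using H_inv x unfolding S0_invariant_def by blast
  moreover have "subst_endo n h x = red (map h x)"
  proof -
    have "map (\<lambda>k. if k < n then h k else k) x = map h x" using lt by (intro map_cong) auto
    then show ?thesis unfolding subst_endo_def piw_red by (rule arg_cong)
  qed
  ultimately show ?thesis by simp
qed

lemma H_conj1: "x \<in> H \<Longrightarrow> red ([k] @ x @ [k]) \<in> H"
proof -
  assume x: "x \<in> H"
  have "conj_endo k \<in> S0" by (rule S0.gen_conj)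
  then have "conj_endo k x \<in> H" using H_inv x unfolding S0_invariant_def by blast
  then show ?thesis by (simp add: conj_endo_def red_append_left)
qed

definition WH :: "nat list set" where "WH = {xs. red xs \<in> H}"

lemma WH_map: "xs \<in> WH \<Longrightarrow> map h xs \<in> WH"
proof -
  assume "xs \<in> WH"
  then have "red xs \<in> H" unfolding WH_def by simp
  then have "red (map h (red xs)) \<in> H" by (rule H_map)
  then show ?thesis unfolding WH_def red_map by simp
qed

lemma WH_concat: "xs \<in> WH \<Longrightarrow> ys \<in> WH \<Longrightarrow> xs @ ys \<in> WH"
proof -
  assume "xs \<in> WH" "ys \<in> WH"
  then have "red xs \<in> H" "red ys \<in> H" unfolding WH_def by simp_all
  then have "red (red xs @ red ys) \<in> H" by (rule H_mult)
  then show ?thesis unfolding WH_def red_append_left red_append_right by simp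
qed

lemma WH_rev: "xs \<in> WH \<Longrightarrow> rev xs \<in> WH"
proof -
  assume "xs \<in> WH"
  then have "red xs \<in> H" by (simp add: WH_def)
  then have "inv\<^bsub>Z2free\<^esub> (red xs) \<in> H" using subgroup.m_inv_closed[OF sg] by blast
  then show ?thesis by (simp add: WH_def Z2_inv red_rev)
qed

lemma WH_conj: "xs \<in> WH \<Longrightarrow> u @ xs @ rev u \<in> WH"
proof (induction u)
  case Nil then show ?case by simp
next
  case (Cons a u)
  then have "red (u @ xs @ rev u) \<in> H" by (simp add: WH_def)
  then have "red ([a] @ red (u @ xs @ rev u) @ [a]) \<in> H" by (rule H_conj1)
  moreover have "red ([a] @ red (u @ xs @ rev u) @ [a]) = red ([a] @ (u @ xs @ rev u) @ [a])"
  proof -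
    have "red ([a] @ (red (u @ xs @ rev u) @ [a])) = red ([a] @ red (red (u @ xs @ rev u) @ [a]))"
      by (simp only: red_append_right)
    also have "\<dots> = red ([a] @ red ((u @ xs @ rev u) @ [a]))" by (simp only: red_append_left)
    also have "\<dots> = red ([a] @ ((u @ xs @ rev u) @ [a]))" by (simp only: red_append_right)
    finally show ?thesis by simp
  qed
  ultimately show ?case by (simp add: WH_def)
qed

lemma WH_rot1: "a # xs \<in> WH \<Longrightarrow> xs @ [a] \<in> WH"
proof -
  assume "a # xs \<in> WH"
  then have "[a] @ (a # xs) @ rev [a] \<in> WH" by (rule WH_conj)
  moreover have "red ([a] @ (a # xs) @ rev [a]) = red (xs @ [a])" using red_cancel[of "[]" a "xs @ [a]"] by simp
  ultimately show ?thesis by (simp add: WH_def)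
qed

lemma WH_rot2: "xs @ [a] \<in> WH \<Longrightarrow> a # xs \<in> WH"
proof -
  assume "xs @ [a] \<in> WH"
  then have "[a] @ (xs @ [a]) @ rev [a] \<in> WH" by (rule WH_conj)
  moreover have "red ([a] @ (xs @ [a]) @ rev [a]) = red (a # xs)" using red_cancel[of "a # xs" a "[]"] by simp
  ultimately show ?thesis by (simp add: WH_def)
qed

lemma Ev_sub: "[a, b] \<in> WH \<Longrightarrow> a \<noteq> b \<Longrightarrow> Ev \<subseteq> H"
proof
  assume ab: "[a, b] \<in> WH" "a \<noteq> b"
  have two: "c \<noteq> d \<Longrightarrow> [c, d] \<in> H" for c d
  proof -
    assume cd: "c \<noteq> d"
    define h where "h x = (if x = a then c else d)" for x
    have "map h [a, b] \<in> WH" using WH_map ab by blast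
    then have "red [c, d] \<in> H" using ab by (simp add: WH_def h_def)
    moreover have "reduced [c, d]" using cd by (simp add: reduced_def nth_Cons')
    ultimately show ?thesis by (simp add: red_reduced)
  qed
  have main: "reduced xs \<Longrightarrow> even (length xs) \<Longrightarrow> xs \<in> H" for xs
  proof (induction xs rule: length_induct)
    case (1 xs)
    show ?case
    proof (cases xs)
      case Nil then show ?thesis using H_nil by simp
    next
      case (Cons c r)
      then obtain d rest where r: "r = d # rest" using 1 by (cases r) auto
      have red1: "reduced (c # d # rest)" using 1 Cons r by simp
      then have "reduced rest" "c \<noteq> d" by (auto simp: reduced_Cons)
      moreover have "even (length rest)" using 1 Cons r by simp
      ultimately have "rest \<in> H" "[c, d] \<in> H" using 1 Cons r two by auto
      then have "red ([c, d] @ rest) \<in> H" using H_mult by blast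
      then show ?thesis using red1 Cons r by (simp add: red_reduced)
    qed
  qed
  fix xs assume "xs \<in> Ev"
  then show "xs \<in> H" using main by (simp add: Ev_def)
qed

lemma WH_two: "a \<noteq> b \<Longrightarrow> [a, b] \<notin> WH"
  using Ev_sub H_Ev H_ne by blast

end


context Hsub
begin

lemma B0: "pf k l g \<in> CH H \<longleftrightarrow> wordf k l g \<in> WH"
proof
  assume "pf k l g \<in> CH H"
  then obtain lab where lab: "labelling (pf k l g) lab" "piw (word (pf k l g) lab) \<in> H"
    unfolding CH_def by blast
  define g' where "g' = (\<lambda>x. lab (block_of (pf k l g) x))"
  have e: "pf k l g = pf k l g'" using Parts_pf[OF pf_Parts lab(1)] by (simp add: g'_def)
  have "\<exists>h. \<forall>x\<in>points k l. g x = h (g' x)" using pf_eq_imp[OF e] by (intro factor_fun) blast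
  then obtain h where h: "\<forall>x\<in>points k l. g x = h (g' x)" by blast
  have "wordf k l g' \<in> WH" using lab(2) by (simp add: WH_def piw_red word_wordf g'_def)
  then have "map h (wordf k l g') \<in> WH" by (rule WH_map)
  moreover have "wordf k l g = map h (wordf k l g')"
    using wordf_cong[of k l g "\<lambda>x. h (g' x)"] h wordf_comp[of k l h g'] by simp
  ultimately show "wordf k l g \<in> WH" by simp
next
  assume w: "wordf k l g \<in> WH"
  obtain lab where "labelling (pf k l g) lab" "word (pf k l g) lab = wordf k l g" using pf_labelling by blast
  then show "pf k l g \<in> CH H" using w pf_Parts unfolding CH_def WH_def by (auto simp: piw_red)
qed

lemma CH_rep: "p \<in> CH H \<Longrightarrow> \<exists>g. p = pf (upk p) (lol p) g \<and> wordf (upk p) (lol p) g \<in> WH"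
proof -
  assume "p \<in> CH H"
  then obtain lab where lab: "p \<in> Parts" "labelling p lab" "piw (word p lab) \<in> H"
    unfolding CH_def by blast
  then show ?thesis using Parts_pf[OF lab(1,2)]
    by (intro exI[of _ "\<lambda>x. lab (block_of p x)"]) (simp add: WH_def piw_red word_wordf)
qed

lemma WH_pair: "[c, c] \<in> WH" using H_nil by (simp add: WH_def red_Cons cr_def)

lemma CH_tensor: "p \<in> CH H \<Longrightarrow> q \<in> CH H \<Longrightarrow> tensor p q \<in> CH H"
proof -
  assume "p \<in> CH H" "q \<in> CH H"
  then obtain g1 g2 where p: "p = pf (upk p) (lol p) g1" "wordf (upk p) (lol p) g1 \<in> WH"
    and q: "q = pf (upk q) (lol q) g2" "wordf (upk q) (lol q) g2 \<in> WH" using CH_rep by metis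
  define k l k' l' where "k = upk p" "l = lol p" "k' = upk q" "l' = lol q"
  define A where "A = map (\<lambda>c. 2 * c) (map (\<lambda>i. g1 (Up i)) [0..<k])"
  define B where "B = map (\<lambda>c. 2 * c) (rev (map (\<lambda>j. g1 (Lo j)) [0..<l]))"
  define w2 where "w2 = map (\<lambda>c. Suc (2 * c)) (wordf k' l' g2)"
  have AB: "A @ B \<in> WH" using WH_map[OF p(2), of "\<lambda>c. 2 * c"]
    by (simp add: A_def B_def k_l_k'_l'_def wordf_def)
  have w2: "w2 \<in> WH" using WH_map[OF q(2)] by (simp add: w2_def k_l_k'_l'_def)
  have "(A @ w2 @ rev A) @ (A @ B) \<in> WH" using WH_concat[OF WH_conj[OF w2] AB] .
  moreover have "red ((A @ w2 @ rev A) @ (A @ B)) = red (A @ w2 @ B)"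
    using red_cancel_rev[of "A @ w2" A B] by simp
  ultimately have "A @ w2 @ B \<in> WH" by (simp add: WH_def)
  then have "wordf (k + k') (l + l') (tf k l g1 g2) \<in> WH"
    by (simp add: wordf_tensor A_def B_def w2_def)
  then have "pf (k + k') (l + l') (tf k l g1 g2) \<in> CH H" using B0 by blast
  then show "tensor p q \<in> CH H" using p(1) q(1) by (metis tensor_pf k_l_k'_l'_def)
qed

lemma CH_inv: "p \<in> CH H \<Longrightarrow> involution p \<in> CH H"
proof -
  assume "p \<in> CH H"
  then obtain g where p: "p = pf (upk p) (lol p) g" "wordf (upk p) (lol p) g \<in> WH" using CH_rep by blast
  have "wordf (lol p) (upk p) (\<lambda>x. g (flip_pt x)) \<in> WH" using WH_rev[OF p(2)] by (simp add: wordf_involution)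
  then show ?thesis using B0 p(1) by (metis involution_pf)
qed

lemma CH_rld: "p \<in> CH H \<Longrightarrow> 0 < upk p \<Longrightarrow> rot_left_down p \<in> CH H"
proof -
  assume "p \<in> CH H" "0 < upk p"
  then obtain g where p: "p = pf (upk p) (lol p) g" "wordf (upk p) (lol p) g \<in> WH" using CH_rep by blast
  obtain k where k: "upk p = Suc k" using \<open>0 < upk p\<close> by (cases "upk p") auto
  obtain a r where ar: "wordf (Suc k) (lol p) g = a # r" by (cases "wordf (Suc k) (lol p) g") (auto simp: wordf_def)
  have "r @ [a] \<in> WH" using WH_rot1 p(2) k ar by simp
  then have "wordf k (Suc (lol p)) (\<lambda>x. g (rotLU_pt x)) \<in> WH" using wordf_rot_left_down[OF ar] by simp
  then have "pf k (Suc (lol p)) (\<lambda>x. g (rotLU_pt x)) \<in> CH H" using B0 by blast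
  then show ?thesis using p(1) k by (metis rot_left_down_pf)
qed

lemma CH_rlu: "p \<in> CH H \<Longrightarrow> 0 < lol p \<Longrightarrow> rot_left_up p \<in> CH H"
proof -
  assume "p \<in> CH H" "0 < lol p"
  then obtain g where p: "p = pf (upk p) (lol p) g" "wordf (upk p) (lol p) g \<in> WH" using CH_rep by blast
  obtain l where l: "lol p = Suc l" using \<open>0 < lol p\<close> by (cases "lol p") auto
  obtain a r where ar: "wordf (upk p) (Suc l) g = r @ [a]"
    by (cases "wordf (upk p) (Suc l) g" rule: rev_exhaust) (auto simp: wordf_def)
  have "a # r \<in> WH" using WH_rot2 p(2) l ar by simp
  then have "wordf (Suc (upk p)) l (\<lambda>x. g (rotUL_pt x)) \<in> WH" using wordf_rot_left_up[OF ar] by simp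
  then have "pf (Suc (upk p)) l (\<lambda>x. g (rotUL_pt x)) \<in> CH H" using B0 by blast
  then show ?thesis using p(1) l by (metis rot_left_up_pf)
qed

lemma CH_rrd: "p \<in> CH H \<Longrightarrow> 0 < upk p \<Longrightarrow> rot_right_down p \<in> CH H"
proof -
  assume "p \<in> CH H" "0 < upk p"
  then obtain g where p: "p = pf (upk p) (lol p) g" "wordf (upk p) (lol p) g \<in> WH" using CH_rep by blast
  obtain k where k: "upk p = Suc k" using \<open>0 < upk p\<close> by (cases "upk p") auto
  have "wordf k (Suc (lol p)) (\<lambda>x. g (rotLR_pt k (Suc (lol p)) x)) \<in> WH"
    using p(2) k by (simp add: wordf_rot_right_down)
  then have "pf k (Suc (lol p)) (\<lambda>x. g (rotLR_pt k (Suc (lol p)) x)) \<in> CH H" using B0 by blast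
  then show ?thesis using p(1) k by (metis rot_right_down_pf)
qed

lemma CH_rru: "p \<in> CH H \<Longrightarrow> 0 < lol p \<Longrightarrow> rot_right_up p \<in> CH H"
proof -
  assume "p \<in> CH H" "0 < lol p"
  then obtain g where p: "p = pf (upk p) (lol p) g" "wordf (upk p) (lol p) g \<in> WH" using CH_rep by blast
  obtain l where l: "lol p = Suc l" using \<open>0 < lol p\<close> by (cases "lol p") auto
  have "wordf (Suc (upk p)) l (\<lambda>x. g (rotUR_pt (Suc (upk p)) l x)) \<in> WH"
    using p(2) l by (simp add: wordf_rot_right_up)
  then have "pf (Suc (upk p)) l (\<lambda>x. g (rotUR_pt (Suc (upk p)) l x)) \<in> CH H" using B0 by blast
  then show ?thesis using p(1) l by (metis rot_right_up_pf)
qed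

end


context Hsub
begin

lemma CH_compose:
  assumes pH: "p \<in> CH H" and qH: "q \<in> CH H" and pq: "lol p = upk q"
  shows "compose p q \<in> CH H"
proof -
  obtain g1 where p: "p = pf (upk p) (lol p) g1" "wordf (upk p) (lol p) g1 \<in> WH" using CH_rep[OF pH] by blast
  obtain g2 where q: "q = pf (upk q) (lol q) g2" "wordf (upk q) (lol q) g2 \<in> WH" using CH_rep[OF qH] by blast
  define k l m where "k = upk p" "l = lol p" "m = lol q"
  have p': "p = pf k l g1" "wordf k l g1 \<in> WH" using p by (simp_all add: k_l_m_def)
  have q': "q = pf l m g2" "wordf l m g2 \<in> WH" using q pq by (simp_all add: k_l_m_def)
  define c where "c = cmp p q"
  have e1: "c (emb_upper x) = c (emb_upper y)" if "x \<in> points k l" "y \<in> points k l" "g1 x = g1 y" for x y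
  proof -
    have "(emb_upper x, emb_upper y) \<in> same_block_rel emb_upper (blocks p)"
      unfolding p'(1) sbr_pf using that by (intro CollectI exI[of _ x] exI[of _ y]) simp
    then have "(emb_upper x, emb_upper y) \<in> crel p q" unfolding crel_def by (intro r_into_rtrancl UnI1)
    then show ?thesis unfolding c_def cmp_eq .
  qed
  have e2: "c (emb_lower x) = c (emb_lower y)" if "x \<in> points l m" "y \<in> points l m" "g2 x = g2 y" for x y
  proof -
    have "(emb_lower x, emb_lower y) \<in> same_block_rel emb_lower (blocks q)"
      unfolding q'(1) sbr_pf using that by (intro CollectI exI[of _ x] exI[of _ y]) simp
    then have "(emb_lower x, emb_lower y) \<in> crel p q" unfolding crel_def by (intro r_into_rtrancl UnI2)
    then show ?thesis unfolding c_def cmp_eq .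
  qed
  obtain h1 where h1: "\<forall>x\<in>points k l. c (emb_upper x) = h1 (g1 x)"
    using factor_fun[of "points k l" g1 "\<lambda>x. c (emb_upper x)", OF e1] by blast
  obtain h2 where h2: "\<forall>x\<in>points l m. c (emb_lower x) = h2 (g2 x)"
    using factor_fun[of "points l m" g2 "\<lambda>x. c (emb_lower x)", OF e2] by blast
  have w1: "wordf k l (\<lambda>x. c (emb_upper x)) \<in> WH"
  proof -
    have "wordf k l (\<lambda>x. c (emb_upper x)) = map h1 (wordf k l g1)"
      using wordf_cong[of k l "\<lambda>x. c (emb_upper x)" "\<lambda>x. h1 (g1 x)"] h1 wordf_comp[of k l h1 g1] by simp
    then show ?thesis using WH_map[OF p'(2)] by simp
  qed
  have w2: "wordf l m (\<lambda>x. c (emb_lower x)) \<in> WH"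
  proof -
    have "wordf l m (\<lambda>x. c (emb_lower x)) = map h2 (wordf l m g2)"
      using wordf_cong[of l m "\<lambda>x. c (emb_lower x)" "\<lambda>x. h2 (g2 x)"] h2 wordf_comp[of l m h2 g2] by simp
    then show ?thesis using WH_map[OF q'(2)] by simp
  qed
  define U M D where "U = map (\<lambda>i. c (Top i)) [0..<k]" "M = map (\<lambda>j. c (Mid j)) [0..<l]"
    "D = map (\<lambda>j. c (Bot j)) [0..<m]"
  have "(U @ rev M) @ (M @ rev D) \<in> WH"
    using WH_concat[OF w1 w2] by (simp add: wordf_def U_M_D_def)
  moreover have "red ((U @ rev M) @ (M @ rev D)) = red (U @ rev D)" using red_cancel_rev[of U M "rev D"] by simp
  ultimately have "U @ rev D \<in> WH" by (simp add: WH_def)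
  then have "wordf k m (\<lambda>x. c (emb_res x)) \<in> WH" by (simp add: wordf_def U_M_D_def)
  then have "pf k m (\<lambda>x. c (emb_res x)) \<in> CH H" using B0 by blast
  moreover have "compose p q = pf k m (\<lambda>x. c (emb_res x))" by (simp add: compose_pf c_def k_l_m_def)
  ultimately show ?thesis by simp
qed

lemma CH_cat: "category_of_partitions (CH H)"
proof -
  have "CH H \<subseteq> Parts" by (auto simp: CH_def)
  moreover have "pair_part \<in> CH H"
    using B0[of 0 2 "\<lambda>_. 0"] WH_pair[of 0] pair_part_pf[of 0] by (simp add: wordf_def numeral_2_eq_2)
  moreover have "id_part \<in> CH H"
    using B0[of 1 1 "\<lambda>_. 0"] WH_pair[of 0] id_part_pf[of 0] by (simp add: wordf_def)
  ultimately show ?thesis unfolding category_of_partitions_def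
    by (intro conjI ballI impI) (simp_all add: CH_tensor CH_compose CH_inv CH_rld CH_rrd CH_rlu CH_rru)
qed

lemma CH_shyp: "simplifiable_hyperoctahedral (CH H)"
proof -
  have "four_block \<in> CH H"
  proof -
    have "wordf 0 4 (\<lambda>_. 0) = [0, 0, 0, 0]" by (simp add: wordf_def numeral_eq_Suc)
    moreover have "red [0, 0, 0, 0] = []" by (simp add: red_Cons cr_def)
    ultimately show ?thesis using B0[of 0 4 "\<lambda>_. 0"] four_block_pf[of 0] H_nil by (simp add: WH_def)
  qed
  moreover have "pair_positioner \<in> CH H"
  proof -
    have "wordf 3 3 rho_f = [0, 0, 1, 0, 0, 1]" by (simp add: wordf_def numeral_eq_Suc rho_f_def)
    moreover have "red [0, 0, 1, 0, 0, 1] = []" by (simp add: red_Cons cr_def)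
    ultimately show ?thesis using B0[of 3 3 rho_f] pair_positioner_pf H_nil by (simp add: WH_def)
  qed
  moreover have "double_singleton \<notin> CH H"
  proof
    assume "double_singleton \<in> CH H"
    then have "pf 0 2 ds_f \<in> CH H" using double_singleton_pf by simp
    then have "wordf 0 2 ds_f \<in> WH" using B0 by blast
    moreover have "wordf 0 2 ds_f = [1, 0]" by (simp add: wordf_def numeral_2_eq_2 ds_f_def)
    ultimately show False using WH_two[of 1 0] by simp
  qed
  ultimately show ?thesis using CH_cat by (simp add: simplifiable_hyperoctahedral_def hyperoctahedral_def)
qed

lemma Fcat_CH: "Fcat (CH H) = H"
proof
  show "Fcat (CH H) \<subseteq> H"
  proof
    fix z assume "z \<in> Fcat (CH H)"
    then obtain p lab where p: "z = piw (word p lab)" "p \<in> CH H" "labelling p lab" unfolding Fcat_def by blast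
    have P: "p \<in> Parts" using p(2) by (simp add: CH_def)
    have "pf (upk p) (lol p) (\<lambda>x. lab (block_of p x)) \<in> CH H" using Parts_pf[OF P p(3)] p(2) by simp
    then have "word p lab \<in> WH" using B0 by (simp add: word_wordf)
    then show "z \<in> H" using p(1) by (simp add: WH_def piw_red)
  qed
  show "H \<subseteq> Fcat (CH H)"
  proof
    fix xs assume xs: "xs \<in> H"
    then have r: "reduced xs" by (rule H_red)
    have "xs \<in> WH" using xs r by (simp add: WH_def red_reduced)
    then have "pf (length xs) 0 (lf (length xs) xs) \<in> CH H" using B0 wordf_up by simp
    moreover obtain lab where "labelling (up xs) lab" "word (up xs) lab = xs"
      using pf_labelling[of "length xs" 0 "lf (length xs) xs"] wordf_up unfolding up_def by metis
    moreover have "piw (word (up xs) lab) = xs" using r \<open>word (up xs) lab = xs\<close> by (simp add: piw_red red_reduced)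
    ultimately show "xs \<in> Fcat (CH H)" unfolding Fcat_def up_def
      by (intro CollectI exI[of _ "up xs"] exI[of _ lab]) (auto simp: up_def)
  qed
qed

end


lemma shyp_shocat: "simplifiable_hyperoctahedral C \<Longrightarrow> shocat C"
  unfolding simplifiable_hyperoctahedral_def hyperoctahedral_def
  by (intro shocat.intro shcat.intro catp.intro shcat_axioms.intro shocat_axioms.intro) auto

theorem mainTheorem8:
  shows "(\<forall>C. simplifiable_hyperoctahedral C \<longrightarrow> proper_S0_inv_subgroup_of_E (Fcat C))
    \<and> (\<forall>H. proper_S0_inv_subgroup_of_E H \<longrightarrow>
           simplifiable_hyperoctahedral (CH H) \<and> Fcat (CH H) = H)
    \<and> (\<forall>C. simplifiable_hyperoctahedral C \<longrightarrow> CH (Fcat C) = C)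
    \<and> bij_betw Fcat {C. simplifiable_hyperoctahedral C} {H. proper_S0_inv_subgroup_of_E H}
    \<and> (\<forall>C1 C2. simplifiable_hyperoctahedral C1 \<longrightarrow> simplifiable_hyperoctahedral C2 \<longrightarrow>
           C1 \<subseteq> C2 \<longrightarrow> Fcat C1 \<subseteq> Fcat C2)
    \<and> (\<forall>H1 H2. proper_S0_inv_subgroup_of_E H1 \<longrightarrow> proper_S0_inv_subgroup_of_E H2 \<longrightarrow>
           H1 \<subseteq> H2 \<longrightarrow> CH H1 \<subseteq> CH H2)"
proof -
  have A: "\<forall>C. simplifiable_hyperoctahedral C \<longrightarrow> proper_S0_inv_subgroup_of_E (Fcat C)"
    using shyp_shocat shocat.Fcat_proper by blast
  have B: "\<forall>H. proper_S0_inv_subgroup_of_E H \<longrightarrow> simplifiable_hyperoctahedral (CH H) \<and> Fcat (CH H) = H"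
    using Hsub.CH_shyp Hsub.Fcat_CH Hsub.intro by blast
  have Cc: "\<forall>C. simplifiable_hyperoctahedral C \<longrightarrow> CH (Fcat C) = C"
    using shyp_shocat shocat.CH_Fcat by blast
  have D: "bij_betw Fcat {C. simplifiable_hyperoctahedral C} {H. proper_S0_inv_subgroup_of_E H}"
    unfolding bij_betw_def
  proof
    show "inj_on Fcat {C. simplifiable_hyperoctahedral C}"
    proof (rule inj_onI)
      fix C1 C2 assume "C1 \<in> {C. simplifiable_hyperoctahedral C}" "C2 \<in> {C. simplifiable_hyperoctahedral C}"
        "Fcat C1 = Fcat C2"
      then show "C1 = C2" using Cc by (metis mem_Collect_eq)
    qed
    show "Fcat ` {C. simplifiable_hyperoctahedral C} = {H. proper_S0_inv_subgroup_of_E H}"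
    proof
      show "Fcat ` {C. simplifiable_hyperoctahedral C} \<subseteq> {H. proper_S0_inv_subgroup_of_E H}" using A by blast
      show "{H. proper_S0_inv_subgroup_of_E H} \<subseteq> Fcat ` {C. simplifiable_hyperoctahedral C}"
      proof
        fix H assume "H \<in> {H. proper_S0_inv_subgroup_of_E H}"
        then have "simplifiable_hyperoctahedral (CH H)" "Fcat (CH H) = H" using B by auto
        then show "H \<in> Fcat ` {C. simplifiable_hyperoctahedral C}" by (metis imageI mem_Collect_eq)
      qed
    qed
  qed
  have E: "\<forall>C1 C2. simplifiable_hyperoctahedral C1 \<longrightarrow> simplifiable_hyperoctahedral C2 \<longrightarrow>
           C1 \<subseteq> C2 \<longrightarrow> Fcat C1 \<subseteq> Fcat C2"
    unfolding Fcat_def by blast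
  have F: "\<forall>H1 H2. proper_S0_inv_subgroup_of_E H1 \<longrightarrow> proper_S0_inv_subgroup_of_E H2 \<longrightarrow>
           H1 \<subseteq> H2 \<longrightarrow> CH H1 \<subseteq> CH H2"
    unfolding CH_def by blast
  show ?thesis using A B Cc D E F by blast
qed


end
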